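(* Let $\Gamma$ be a discrete group with identity $e$, and let $L:\Gamma\to\mathbb{R}_+$ be a length function on $\Gamma$ with $L(g)>0$ for $g\ne e$, such that $\{g\in\Gamma:L(g)\le c\}$ is finite for every $c>0$ and $\sum_{g\neq e}\frac{1}{L(g)^2}<\infty$. Then $d(\varphi,\psi)<\infty$ for all states $\varphi,\psi$ of $C^*_r(\Gamma)$, and the metric $d$ induces on the state space $\mathcal{S}(C^*_r(\Gamma))$ the weak-$*$ topology.
   Context: A length function satisfies $L(gh)\le L(g)+L(h)$, $L(g^{-1})=L(g)$, $L(e)=0$. $C^*_r(\Gamma)$ is the reduced group C$^*$-algebra acting on $\ell^2(\Gamma)$ by the left regular representation ($\lambda_g\delta_h=\delta_{gh}$). $D$ is the unbounded operator on $\ell^2(\Gamma)$ with $D\delta_g=L(g)\delta_g$. For states $\varphi,\psi$ of $C^*_r(\Gamma)$, $d(\varphi,\psi)=\sup\{|\varphi(a)-\psi(a)|: a\in C^*_r(\Gamma),\ [D,a]\text{ bounded with }\|[D,a]\|\le1\}$. *)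

theory Defs
  imports "HOL-Analysis.Analysis"
begin

text \<open>Vectors of l2(Gamma) are functions Gamma => complex; (bounded) operators are
  maps between such functions, normalised to be 0 outside l2.
  The group Gamma is written additively (type class group_add, not necessarily
  commutative): identity 0, product g + h, inverse -g.\<close>

type_synonym 'g vec = "'g \<Rightarrow> complex"
type_synonym 'g op = "'g vec \<Rightarrow> 'g vec"

definition l2 :: "'g vec set" where
  "l2 = {f. (\<lambda>x. (cmod (f x))\<^sup>2) summable_on UNIV}"

definition l2norm :: "'g vec \<Rightarrow> real" where
  "l2norm f = sqrt (\<Sum>\<^sub>\<infinity>x. (cmod (f x))\<^sup>2)"

definition l2inner :: "'g vec \<Rightarrow> 'g vec \<Rightarrow> complex" where
  "l2inner f h = (\<Sum>\<^sub>\<infinity>x. cnj (f x) * h x)"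

definition bdd_op :: "'g op \<Rightarrow> bool" where
  "bdd_op T \<longleftrightarrow>
     (\<forall>f\<in>l2. T f \<in> l2) \<and>
     (\<forall>f\<in>l2. \<forall>h\<in>l2. \<forall>c::complex. T (\<lambda>x. f x + c * h x) = (\<lambda>x. T f x + c * T h x)) \<and>
     (\<exists>K. \<forall>f\<in>l2. l2norm (T f) \<le> K * l2norm f) \<and>
     (\<forall>f. f \<notin> l2 \<longrightarrow> T f = (\<lambda>_. 0))"

definition opnorm :: "'g op \<Rightarrow> real" where
  "opnorm T = Sup ((\<lambda>f. l2norm (T f)) ` {f \<in> l2. l2norm f \<le> 1})"

text \<open>Left regular representation: (lambda_g f)(x) = f(g^-1 x), so lambda_g delta_h = delta_(gh).\<close>
definition lreg :: "'g::group_add \<Rightarrow> 'g op" where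
  "lreg g = (\<lambda>f. if f \<in> l2 then (\<lambda>x. f (- g + x)) else (\<lambda>_. 0))"

text \<open>Finite linear combination sum_(g in F) c g * lambda_g (element of the group algebra).\<close>
definition grop :: "'g::group_add set \<Rightarrow> ('g \<Rightarrow> complex) \<Rightarrow> 'g op" where
  "grop F c = (\<lambda>f. if f \<in> l2 then (\<lambda>x. \<Sum>g\<in>F. c g * f (- g + x)) else (\<lambda>_. 0))"

definition Cred :: "('g::group_add) op set" where
  "Cred = {T. bdd_op T \<and>
     (\<forall>\<epsilon>>0. \<exists>F c. finite F \<and> opnorm (\<lambda>f x. T f x - grop F c f x) < \<epsilon>)}"

definition pos_op :: "'g op \<Rightarrow> bool" where
  "pos_op T \<longleftrightarrow> (\<forall>f\<in>l2. l2inner f (T f) \<in> \<real> \<and> Re (l2inner f (T f)) \<ge> 0)"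

definition is_state :: "('g::group_add op \<Rightarrow> complex) \<Rightarrow> bool" where
  "is_state \<phi> \<longleftrightarrow>
     (\<forall>T\<in>Cred. \<forall>S\<in>Cred. \<forall>c::complex. \<phi> (\<lambda>f x. T f x + c * S f x) = \<phi> T + c * \<phi> S) \<and>
     (\<forall>T\<in>Cred. pos_op T \<longrightarrow> \<phi> T \<in> \<real> \<and> Re (\<phi> T) \<ge> 0) \<and>
     \<phi> (lreg 0) = 1 \<and>
     (\<forall>T. T \<notin> Cred \<longrightarrow> \<phi> T = 0)"

definition states :: "('g::group_add op \<Rightarrow> complex) set" where
  "states = {\<phi>. is_state \<phi>}"

text \<open>a in C*_r(Gamma) with [D,a] bounded and of norm at most 1, where D delta_g = L(g) delta_g.
  The commutator is taken on the core of finitely supported vectors: a xi lies in dom D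
  and ||D(a xi) - a(D xi)|| <= ||xi||.\<close>
definition lip1 :: "('g::group_add \<Rightarrow> real) \<Rightarrow> 'g op \<Rightarrow> bool" where
  "lip1 L T \<longleftrightarrow> T \<in> Cred \<and>
     (\<forall>\<xi>. finite {x. \<xi> x \<noteq> 0} \<longrightarrow>
        (\<lambda>x. of_real (L x) * T \<xi> x) \<in> l2 \<and>
        l2norm (\<lambda>x. of_real (L x) * T \<xi> x - T (\<lambda>y. of_real (L y) * \<xi> y) x) \<le> l2norm \<xi>)"

definition dist_D :: "('g::group_add \<Rightarrow> real) \<Rightarrow> ('g op \<Rightarrow> complex) \<Rightarrow> ('g op \<Rightarrow> complex) \<Rightarrow> ereal" where
  "dist_D L \<phi> \<psi> = (SUP T \<in> {T. lip1 L T}. ereal (cmod (\<phi> T - \<psi> T)))"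

definition weakstar :: "('g::group_add op \<Rightarrow> complex) topology" where
  "weakstar = pullback_topology states (\<lambda>\<phi>. restrict \<phi> Cred)
                (product_topology (\<lambda>_. euclidean) Cred)"

definition dist_D_open :: "('g::group_add \<Rightarrow> real) \<Rightarrow> ('g op \<Rightarrow> complex) set \<Rightarrow> bool" where
  "dist_D_open L U \<longleftrightarrow> U \<subseteq> states \<and>
     (\<forall>\<phi>\<in>U. \<exists>\<epsilon>>0. \<forall>\<psi>\<in>states. dist_D L \<phi> \<psi> < ereal \<epsilon> \<longrightarrow> \<psi> \<in> U)"

end

theory Submission
  imports Defs
begin


lemma l2_FS:
  assumes "\<And>E. finite E \<Longrightarrow> L2_set (\<lambda>x. cmod (f x)) E \<le> B"
  shows "f \<in> l2 \<and> l2norm f \<le> B"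
proof -
  have B0: "0 \<le> B" using assms[of "{}"] by simp
  have sq: "(\<Sum>x\<in>E. (cmod (f x))\<^sup>2) \<le> B\<^sup>2" if "finite E" for E
  proof -
    have "L2_set (\<lambda>x. cmod (f x)) E \<le> B" using assms that by blast
    then have "(L2_set (\<lambda>x. cmod (f x)) E)\<^sup>2 \<le> B\<^sup>2"
      by (simp add: power_mono)
    then show ?thesis unfolding L2_set_def by (simp add: sum_nonneg)
  qed
  have summ: "(\<lambda>x. (cmod (f x))\<^sup>2) summable_on UNIV"
    by (rule nonneg_bdd_above_summable_on) (auto intro!: bdd_aboveI2 sq)
  have "(\<Sum>\<^sub>\<infinity>x. (cmod (f x))\<^sup>2) \<le> B\<^sup>2"
    by (rule infsum_le_finite_sums[OF summ]) (use sq in auto)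
  then have "l2norm f \<le> sqrt (B\<^sup>2)" unfolding l2norm_def by (rule real_sqrt_le_mono)
  with B0 show ?thesis using summ by (simp add: l2_def)
qed

lemma l2_FS':
  assumes "f \<in> l2"
  shows "L2_set (\<lambda>x. cmod (f x)) E \<le> l2norm f"
proof (cases "finite E")
  case True
  have "(\<Sum>x\<in>E. (cmod (f x))\<^sup>2) \<le> (\<Sum>\<^sub>\<infinity>x. (cmod (f x))\<^sup>2)"
    by (rule finite_sum_le_infsum) (use assms True in \<open>auto simp: l2_def\<close>)
  then show ?thesis unfolding L2_set_def l2norm_def by (rule real_sqrt_le_mono)
next
  case False then show ?thesis by (simp add: l2norm_def infsum_nonneg)
qed

lemma l2norm_nonneg[simp]: "0 \<le> l2norm f"
  by (simp add: l2norm_def infsum_nonneg)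

lemma l2_pointwise: "f \<in> l2 \<Longrightarrow> cmod (f x) \<le> l2norm f"
  using l2_FS'[of f "{x}"] by (simp add: L2_set_def)

lemma l2_compare:
  assumes "h \<in> l2" "\<And>x. cmod (f x) \<le> c * cmod (h x)" "0 \<le> c"
  shows "f \<in> l2 \<and> l2norm f \<le> c * l2norm h"
proof (rule l2_FS)
  fix E :: "'a set" assume "finite E"
  have "L2_set (\<lambda>x. cmod (f x)) E \<le> L2_set (\<lambda>x. c * cmod (h x)) E"
    by (rule L2_set_mono) (use assms in auto)
  also have "\<dots> = c * L2_set (\<lambda>x. cmod (h x)) E"
    using assms(3) by (simp add: L2_set_right_distrib)
  also have "\<dots> \<le> c * l2norm h" using l2_FS'[OF assms(1)] assms(3) by (simp add: mult_left_mono)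
  finally show "L2_set (\<lambda>x. cmod (f x)) E \<le> c * l2norm h" .
qed

lemma l2_lin:
  assumes "f \<in> l2" "h \<in> l2"
  shows "(\<lambda>x. f x + c * h x) \<in> l2 \<and> l2norm (\<lambda>x. f x + c * h x) \<le> l2norm f + cmod c * l2norm h"
proof (rule l2_FS)
  fix E :: "'a set" assume "finite E"
  have "L2_set (\<lambda>x. cmod (f x + c * h x)) E \<le> L2_set (\<lambda>x. cmod (f x) + cmod c * cmod (h x)) E"
    by (rule L2_set_mono) (auto simp: norm_triangle_le norm_mult)
  also have "\<dots> \<le> L2_set (\<lambda>x. cmod (f x)) E + L2_set (\<lambda>x. cmod c * cmod (h x)) E"
    by (rule L2_set_triangle_ineq)
  also have "\<dots> = L2_set (\<lambda>x. cmod (f x)) E + cmod c * L2_set (\<lambda>x. cmod (h x)) E"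
    by (simp add: L2_set_right_distrib)
  also have "\<dots> \<le> l2norm f + cmod c * l2norm h"
    using l2_FS'[OF assms(1)] l2_FS'[OF assms(2)] by (simp add: add_mono mult_left_mono)
  finally show "L2_set (\<lambda>x. cmod (f x + c * h x)) E \<le> l2norm f + cmod c * l2norm h" .
qed

lemma l2_zero[simp]: "(\<lambda>_. 0) \<in> l2" and l2norm_zero[simp]: "l2norm (\<lambda>_. 0) = 0"
  by (auto simp: l2_def l2norm_def)

lemma l2_scale:
  assumes "f \<in> l2"
  shows "(\<lambda>x. c * f x) \<in> l2 \<and> l2norm (\<lambda>x. c * f x) = cmod c * l2norm f"
proof -
  have "(\<lambda>x. (cmod (c * f x))\<^sup>2) = (\<lambda>x. (cmod c)\<^sup>2 * (cmod (f x))\<^sup>2)"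
    by (simp add: norm_mult power_mult_distrib)
  moreover have "(\<lambda>x. (cmod c)\<^sup>2 * (cmod (f x))\<^sup>2) summable_on UNIV"
    using assms by (intro summable_on_cmult_right) (simp add: l2_def)
  moreover have "(\<Sum>\<^sub>\<infinity>x. (cmod c)\<^sup>2 * (cmod (f x))\<^sup>2) = (cmod c)\<^sup>2 * (\<Sum>\<^sub>\<infinity>x. (cmod (f x))\<^sup>2)"
    by (rule infsum_cmult_right')
  ultimately show ?thesis
    by (simp add: l2_def l2norm_def real_sqrt_mult)
qed

lemma l2_diff:
  assumes "f \<in> l2" "h \<in> l2"
  shows "(\<lambda>x. f x - h x) \<in> l2 \<and> l2norm (\<lambda>x. f x - h x) \<le> l2norm f + l2norm h"
  using l2_lin[OF assms, of "-1"] by simp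

lemma l2_fin: assumes "finite {x. f x \<noteq> 0}" shows "f \<in> l2"
proof -
  have "(\<lambda>x. (cmod (f x))\<^sup>2) summable_on {x. f x \<noteq> 0}" using assms by simp
  moreover have "(\<lambda>x. (cmod (f x))\<^sup>2) summable_on {x. f x \<noteq> 0} \<longleftrightarrow> (\<lambda>x. (cmod (f x))\<^sup>2) summable_on UNIV"
    by (rule summable_on_cong_neutral) auto
  ultimately show ?thesis unfolding l2_def by simp
qed

lemma l2_bij:
  assumes "bij \<sigma>" "f \<in> l2"
  shows "(\<lambda>x. f (\<sigma> x)) \<in> l2 \<and> l2norm (\<lambda>x. f (\<sigma> x)) = l2norm f"
proof -
  have "(\<lambda>x. (cmod (f (\<sigma> x)))\<^sup>2) summable_on UNIV"
    using summable_on_reindex_bij_betw[OF assms(1), of "\<lambda>y. (cmod (f y))\<^sup>2"] assms(2)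
    by (simp add: l2_def)
  moreover have "(\<Sum>\<^sub>\<infinity>x. (cmod (f (\<sigma> x)))\<^sup>2) = (\<Sum>\<^sub>\<infinity>y. (cmod (f y))\<^sup>2)"
    using infsum_reindex_bij_betw[OF assms(1), of "\<lambda>y. (cmod (f y))\<^sup>2"] by simp
  ultimately show ?thesis by (simp add: l2_def l2norm_def)
qed

lemma bij_negadd: "bij (\<lambda>g. - g + (x::'g::group_add))"
proof (rule bij_betwI')
  fix y show "\<exists>z\<in>UNIV. y = - z + x"
    by (rule bexI[of _ "x + - y"]) (auto simp: minus_add add.assoc)
qed auto

lemma bij_addl: "bij (\<lambda>y. (g::'g::group_add) + y)"
proof (rule bij_betwI')
  fix y show "\<exists>z\<in>UNIV. y = g + z"
    by (rule bexI[of _ "- g + y"]) (auto simp: add.assoc)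
qed auto

lemma bij_addr_neg: "bij (\<lambda>y. (x::'g::group_add) + - y)"
proof (rule bij_betwI')
  fix y show "\<exists>z\<in>UNIV. y = x + - z"
    by (rule bexI[of _ "- y + x"]) (auto simp: minus_add add.assoc)
qed (metis add_left_cancel minus_equation_iff diff_conv_add_uminus, simp)

lemma CS_real:
  fixes u v :: "'a \<Rightarrow> real"
  assumes "(\<lambda>x. (u x)\<^sup>2) summable_on UNIV" "(\<lambda>x. (v x)\<^sup>2) summable_on UNIV"
  shows "(\<lambda>x. \<bar>u x\<bar> * \<bar>v x\<bar>) summable_on UNIV \<and>
     (\<Sum>\<^sub>\<infinity>x. \<bar>u x\<bar> * \<bar>v x\<bar>) \<le> sqrt (\<Sum>\<^sub>\<infinity>x. (u x)\<^sup>2) * sqrt (\<Sum>\<^sub>\<infinity>x. (v x)\<^sup>2)"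
proof -
  have b: "(\<Sum>x\<in>E. \<bar>u x\<bar> * \<bar>v x\<bar>) \<le> sqrt (\<Sum>\<^sub>\<infinity>x. (u x)\<^sup>2) * sqrt (\<Sum>\<^sub>\<infinity>x. (v x)\<^sup>2)"
    if "finite E" for E
  proof -
    have "(\<Sum>x\<in>E. \<bar>u x\<bar> * \<bar>v x\<bar>) \<le> L2_set u E * L2_set v E" by (rule L2_set_mult_ineq)
    also have "\<dots> \<le> sqrt (\<Sum>\<^sub>\<infinity>x. (u x)\<^sup>2) * sqrt (\<Sum>\<^sub>\<infinity>x. (v x)\<^sup>2)"
    proof (rule mult_mono)
      show "L2_set u E \<le> sqrt (\<Sum>\<^sub>\<infinity>x. (u x)\<^sup>2)" unfolding L2_set_def
        by (rule real_sqrt_le_mono, rule finite_sum_le_infsum) (use assms that in auto)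
      show "L2_set v E \<le> sqrt (\<Sum>\<^sub>\<infinity>x. (v x)\<^sup>2)" unfolding L2_set_def
        by (rule real_sqrt_le_mono, rule finite_sum_le_infsum) (use assms that in auto)
    qed (auto simp: infsum_nonneg)
    finally show ?thesis .
  qed
  have s: "(\<lambda>x. \<bar>u x\<bar> * \<bar>v x\<bar>) summable_on UNIV"
    by (rule nonneg_bdd_above_summable_on) (auto intro!: bdd_aboveI2 b)
  then show ?thesis using infsum_le_finite_sums[OF s] b by auto
qed

lemma CS:
  assumes "f \<in> l2" "h \<in> l2" "\<And>x. cmod (p x) \<le> cmod (f x) * cmod (h x)"
  shows "p summable_on UNIV \<and> cmod (\<Sum>\<^sub>\<infinity>x. p x) \<le> l2norm f * l2norm h"
proof -
  from CS_real[of "\<lambda>x. cmod (f x)" "\<lambda>x. cmod (h x)"] assms(1,2)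
  have c: "(\<lambda>x. cmod (f x) * cmod (h x)) summable_on UNIV"
     "(\<Sum>\<^sub>\<infinity>x. cmod (f x) * cmod (h x)) \<le> l2norm f * l2norm h"
    by (auto simp: l2_def l2norm_def)
  have a: "(\<lambda>x. norm (p x)) summable_on UNIV"
    by (rule summable_on_comparison_test[OF c(1)]) (use assms(3) in auto)
  have "cmod (\<Sum>\<^sub>\<infinity>x. p x) \<le> (\<Sum>\<^sub>\<infinity>x. cmod (p x))" by (rule norm_infsum_bound[OF a])
  also have "\<dots> \<le> (\<Sum>\<^sub>\<infinity>x. cmod (f x) * cmod (h x))"
    by (rule infsum_mono[OF a c(1)]) (use assms(3) in auto)
  finally show ?thesis using c(2) abs_summable_summable[OF a] by auto
qed

lemma l2inner_self: "f \<in> l2 \<Longrightarrow> l2inner f f = complex_of_real ((l2norm f)\<^sup>2)"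
proof -
  assume f: "f \<in> l2"
  have "l2inner f f = (\<Sum>\<^sub>\<infinity>x. complex_of_real ((cmod (f x))\<^sup>2))"
    unfolding l2inner_def by (rule infsum_cong) (metis complex_norm_square mult.commute)
  also have "\<dots> = complex_of_real (\<Sum>\<^sub>\<infinity>x. (cmod (f x))\<^sup>2)"
    using f unfolding l2_def
    by (intro infsumI has_sum_of_real) (simp add: summable_iff_has_sum_infsum)
  finally show ?thesis using f by (simp add: l2norm_def infsum_nonneg)
qed



definition conv :: "('g::group_add \<Rightarrow> complex) \<Rightarrow> 'g vec \<Rightarrow> 'g vec" where
  "conv b f = (\<lambda>x. \<Sum>\<^sub>\<infinity>g. b g * f (- g + x))"

definition Conv :: "('g::group_add \<Rightarrow> complex) \<Rightarrow> 'g op" where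
  "Conv b = (\<lambda>f. if f \<in> l2 then conv b f else (\<lambda>_. 0))"

definition opb :: "'g op \<Rightarrow> real \<Rightarrow> bool" where
  "opb X K \<longleftrightarrow> (\<forall>f\<in>l2. X f \<in> l2 \<and> l2norm (X f) \<le> K * l2norm f)"

definition adj :: "('g::group_add \<Rightarrow> complex) \<Rightarrow> ('g \<Rightarrow> complex)" where
  "adj b = (\<lambda>g. cnj (b (- g)))"

definition delta :: "'g \<Rightarrow> 'g \<Rightarrow> complex" where
  "delta g = (\<lambda>x. if x = g then 1 else 0)"

lemma infsum_finsum:
  fixes F :: "'x \<Rightarrow> 'y \<Rightarrow> 'z::{topological_comm_monoid_add, t2_space}"
  assumes "finite E" "\<And>x. x \<in> E \<Longrightarrow> (\<lambda>g. F x g) summable_on A"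
  shows "(\<lambda>g. \<Sum>x\<in>E. F x g) summable_on A \<and> (\<Sum>\<^sub>\<infinity>g\<in>A. \<Sum>x\<in>E. F x g) = (\<Sum>x\<in>E. \<Sum>\<^sub>\<infinity>g\<in>A. F x g)"
  using assms
proof (induction E rule: finite_induct)
  case empty then show ?case by simp
next
  case (insert y E)
  then have s1: "(\<lambda>g. F y g) summable_on A" and s2: "(\<lambda>g. \<Sum>x\<in>E. F x g) summable_on A"
    and e: "(\<Sum>\<^sub>\<infinity>g\<in>A. \<Sum>x\<in>E. F x g) = (\<Sum>x\<in>E. \<Sum>\<^sub>\<infinity>g\<in>A. F x g)" by auto
  have "(\<lambda>g. F y g + (\<Sum>x\<in>E. F x g)) summable_on A" by (rule summable_on_add[OF s1 s2])
  moreover have "(\<Sum>\<^sub>\<infinity>g\<in>A. F y g + (\<Sum>x\<in>E. F x g)) = (\<Sum>\<^sub>\<infinity>g\<in>A. F y g) + (\<Sum>\<^sub>\<infinity>g\<in>A. \<Sum>x\<in>E. F x g)"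
    by (rule infsum_add[OF s1 s2])
  ultimately show ?case using insert.hyps e by simp
qed

lemma l2_translate: fixes f :: "'g::group_add vec" assumes "f \<in> l2" shows "(\<lambda>g. f (- g + x)) \<in> l2 \<and> l2norm (\<lambda>g. f (- g + x)) = l2norm f"
  using l2_bij[OF bij_negadd[of x] assms] by simp

lemma l2_translate2: fixes f :: "'g::group_add vec" assumes "f \<in> l2" shows "(\<lambda>x. f (- g + x)) \<in> l2 \<and> l2norm (\<lambda>x. f (- g + x)) = l2norm f"
  using l2_bij[OF bij_addl[of "- g"] assms] by simp

lemma neg_add_0_iff: "(- g + x = (0::'g::group_add)) = (g = x)"
  by (auto simp: add_eq_0_iff)

lemma conv_summ:
  assumes "b \<in> l2" "f \<in> l2"
  shows "(\<lambda>g. b g * f (- g + x)) summable_on UNIV \<and> cmod (conv b f x) \<le> l2norm b * l2norm f"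
proof -
  have t: "(\<lambda>g. f (- g + x)) \<in> l2" "l2norm (\<lambda>g. f (- g + x)) = l2norm f"
    using l2_translate[OF assms(2), of x] by auto
  have "(\<lambda>g. b g * f (- g + x)) summable_on UNIV \<and> cmod (\<Sum>\<^sub>\<infinity>g. b g * f (- g + x)) \<le> l2norm b * l2norm (\<lambda>g. f (- g + x))"
    by (rule CS[OF assms(1) t(1)]) (simp add: norm_mult)
  then show ?thesis using t(2) by (simp add: conv_def)
qed

lemma conv_lin_f:
  assumes "b \<in> l2" "f \<in> l2" "h \<in> l2"
  shows "conv b (\<lambda>x. f x + c * h x) = (\<lambda>x. conv b f x + c * conv b h x)"
proof
  fix x
  have s1: "(\<lambda>g. b g * f (- g + x)) summable_on UNIV" using conv_summ[OF assms(1,2)] by blast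
  have s2: "(\<lambda>g. c * (b g * h (- g + x))) summable_on UNIV"
    by (rule summable_on_cmult_right) (use conv_summ[OF assms(1,3)] in blast)
  have "conv b (\<lambda>x. f x + c * h x) x = (\<Sum>\<^sub>\<infinity>g. b g * f (- g + x) + c * (b g * h (- g + x)))"
    unfolding conv_def by (simp add: algebra_simps)
  also have "\<dots> = (\<Sum>\<^sub>\<infinity>g. b g * f (- g + x)) + (\<Sum>\<^sub>\<infinity>g. c * (b g * h (- g + x)))"
    by (rule infsum_add[OF s1 s2])
  also have "\<dots> = conv b f x + c * conv b h x"
    unfolding conv_def by (simp add: infsum_cmult_right')
  finally show "conv b (\<lambda>x. f x + c * h x) x = conv b f x + c * conv b h x" .
qed

lemma conv_lin_b:
  assumes "b \<in> l2" "b' \<in> l2" "f \<in> l2"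
  shows "conv (\<lambda>g. b g + c * b' g) f = (\<lambda>x. conv b f x + c * conv b' f x)"
proof
  fix x
  have s1: "(\<lambda>g. b g * f (- g + x)) summable_on UNIV" using conv_summ[OF assms(1,3)] by blast
  have s2: "(\<lambda>g. c * (b' g * f (- g + x))) summable_on UNIV"
    by (rule summable_on_cmult_right) (use conv_summ[OF assms(2,3)] in blast)
  have "conv (\<lambda>g. b g + c * b' g) f x = (\<Sum>\<^sub>\<infinity>g. b g * f (- g + x) + c * (b' g * f (- g + x)))"
    unfolding conv_def by (simp add: algebra_simps)
  also have "\<dots> = (\<Sum>\<^sub>\<infinity>g. b g * f (- g + x)) + (\<Sum>\<^sub>\<infinity>g. c * (b' g * f (- g + x)))"
    by (rule infsum_add[OF s1 s2])
  also have "\<dots> = conv b f x + c * conv b' f x"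
    unfolding conv_def by (simp add: infsum_cmult_right')
  finally show "conv (\<lambda>g. b g + c * b' g) f x = conv b f x + c * conv b' f x" .
qed

lemma conv_fin:
  assumes "finite G" "\<And>g. g \<notin> G \<Longrightarrow> k g = 0"
  shows "conv k f x = (\<Sum>g\<in>G. k g * f (- g + x))"
proof -
  have "conv k f x = (\<Sum>\<^sub>\<infinity>g\<in>G. k g * f (- g + x))"
    unfolding conv_def by (rule infsum_cong_neutral) (use assms in auto)
  then show ?thesis using assms by simp
qed

lemma delta_l2[simp]: "delta g \<in> l2"
  by (rule l2_fin) (simp add: delta_def)

lemma delta_norm[simp]: "l2norm (delta g) = 1"
proof -
  have "(\<Sum>\<^sub>\<infinity>x. (cmod (delta g x))\<^sup>2) = (\<Sum>\<^sub>\<infinity>x\<in>{g}. (cmod (delta g x))\<^sup>2)"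
    by (rule infsum_cong_neutral) (auto simp: delta_def)
  then show ?thesis by (simp add: l2norm_def delta_def)
qed

lemma conv_delta0: "conv b (delta 0) = b"
proof
  fix x
  have "conv b (delta 0) x = (\<Sum>\<^sub>\<infinity>g\<in>{x}. b g * delta 0 (- g + x))"
    unfolding conv_def by (rule infsum_cong_neutral) (auto simp: delta_def neg_add_0_iff)
  then show "conv b (delta 0) x = b x" by (simp add: delta_def)
qed

lemma conv_deltag: "conv (delta g) f = (\<lambda>x. f (- g + x))"
proof
  fix x
  have "conv (delta g) f x = (\<Sum>\<^sub>\<infinity>h\<in>{g}. delta g h * f (- h + x))"
    unfolding conv_def by (rule infsum_cong_neutral) (auto simp: delta_def)
  then show "conv (delta g) f x = f (- g + x)" by (simp add: delta_def)
qed

lemma grop_Conv: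
  assumes "finite G"
  shows "grop G c = Conv (\<lambda>g. if g \<in> G then c g else 0)"
proof -
  have "conv (\<lambda>g. if g \<in> G then c g else 0) f x = (\<Sum>g\<in>G. c g * f (- g + x))" for f x
    by (subst conv_fin[OF assms]) auto
  then show ?thesis unfolding grop_def Conv_def by (auto intro!: ext)
qed

lemma lreg_Conv: "lreg g = Conv (delta g)"
  unfolding lreg_def Conv_def conv_deltag by simp

lemma l1_l2:
  assumes "(\<lambda>g. cmod (b g)) summable_on UNIV"
  shows "b \<in> l2"
proof -
  define N where "N = (\<Sum>\<^sub>\<infinity>g. cmod (b g))"
  have bd: "cmod (b g) \<le> N" for g
    unfolding N_def using finite_sum_le_infsum[OF assms, of "{g}"] by auto
  have "(\<lambda>g. N * cmod (b g)) summable_on UNIV" using assms by (rule summable_on_cmult_right)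
  then have "(\<lambda>g. (cmod (b g))\<^sup>2) summable_on UNIV"
    by (rule summable_on_comparison_test) (auto simp: power2_eq_square bd mult_right_mono)
  then show ?thesis by (simp add: l2_def)
qed

lemma C2:
  assumes b1: "(\<lambda>g. cmod (b g)) summable_on UNIV" and f: "f \<in> l2"
  shows "conv b f \<in> l2 \<and> l2norm (conv b f) \<le> (\<Sum>\<^sub>\<infinity>g. cmod (b g)) * l2norm f"
proof -
  define N where "N = (\<Sum>\<^sub>\<infinity>g. cmod (b g))"
  have N0: "0 \<le> N" unfolding N_def by (simp add: infsum_nonneg)
  define W where "W x = (\<Sum>\<^sub>\<infinity>g. cmod (b g) * (cmod (f (- g + x)))\<^sup>2)" for x
  have pw: "(cmod (f (- g + x)))\<^sup>2 \<le> (l2norm f)\<^sup>2" for g x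
    using l2_pointwise[OF f, of "- g + x"] by (simp add: power_mono)
  define FF where "FF x g = cmod (b g) * (cmod (f (- g + x)))\<^sup>2" for x g
  have Wsum: "(\<lambda>g. cmod (b g) * (cmod (f (- g + x)))\<^sup>2) summable_on UNIV" for x
    by (rule summable_on_comparison_test[OF summable_on_cmult_left[OF b1, of "(l2norm f)\<^sup>2"]])
      (auto intro: mult_left_mono pw)
  have key: "(cmod (conv b f x))\<^sup>2 \<le> N * W x" for x
  proof -
    have s: "(\<lambda>g. cmod (b g) * cmod (f (- g + x))) summable_on UNIV"
      by (rule summable_on_comparison_test[OF summable_on_cmult_left[OF b1, of "l2norm f"]])
        (auto intro: mult_left_mono l2_pointwise[OF f])
    have "cmod (conv b f x) \<le> (\<Sum>\<^sub>\<infinity>g. cmod (b g * f (- g + x)))"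
      unfolding conv_def by (rule norm_infsum_bound) (use s in \<open>simp add: norm_mult\<close>)
    also have "\<dots> = (\<Sum>\<^sub>\<infinity>g. \<bar>sqrt (cmod (b g))\<bar> * \<bar>sqrt (cmod (b g)) * cmod (f (- g + x))\<bar>)"
      by (rule infsum_cong) (simp add: norm_mult abs_mult mult.assoc[symmetric])
    also have "\<dots> \<le> sqrt (\<Sum>\<^sub>\<infinity>g. (sqrt (cmod (b g)))\<^sup>2) * sqrt (\<Sum>\<^sub>\<infinity>g. (sqrt (cmod (b g)) * cmod (f (- g + x)))\<^sup>2)"
      by (rule CS_real[THEN conjunct2]) (use b1 Wsum[of x] in \<open>simp_all add: power_mult_distrib\<close>)
    also have "\<dots> = sqrt N * sqrt (W x)"
      by (simp add: N_def W_def power_mult_distrib)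
    finally have "cmod (conv b f x) \<le> sqrt N * sqrt (W x)" .
    moreover have "0 \<le> W x" unfolding W_def by (simp add: infsum_nonneg)
    ultimately have "(cmod (conv b f x))\<^sup>2 \<le> (sqrt N * sqrt (W x))\<^sup>2"
      by (simp add: power_mono)
    then show ?thesis using N0 \<open>0 \<le> W x\<close> by (simp add: power_mult_distrib)
  qed
  show ?thesis unfolding N_def[symmetric]
  proof (rule l2_FS)
    fix E :: "'a set" assume E: "finite E"
    have "(\<Sum>x\<in>E. (cmod (conv b f x))\<^sup>2) \<le> (\<Sum>x\<in>E. N * W x)" by (rule sum_mono) (rule key)
    also have "\<dots> = N * (\<Sum>\<^sub>\<infinity>g. \<Sum>x\<in>E. cmod (b g) * (cmod (f (- g + x)))\<^sup>2)"
      unfolding W_def using infsum_finsum[where F=FF and E=E and A=UNIV] E Wsum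
      by (simp add: sum_distrib_left FF_def)
    also have "\<dots> \<le> N * (\<Sum>\<^sub>\<infinity>g. cmod (b g) * (l2norm f)\<^sup>2)"
    proof (rule mult_left_mono[OF _ N0], rule infsum_mono)
      show "(\<lambda>g. \<Sum>x\<in>E. cmod (b g) * (cmod (f (- g + x)))\<^sup>2) summable_on UNIV"
        using infsum_finsum[where F=FF and E=E and A=UNIV] E Wsum by (simp add: FF_def)
      show "(\<lambda>g. cmod (b g) * (l2norm f)\<^sup>2) summable_on UNIV"
        by (rule summable_on_cmult_left[OF b1])
      fix g
      have "L2_set (\<lambda>x. cmod (f (- g + x))) E \<le> l2norm f"
        using l2_FS'[OF l2_translate2[OF f, THEN conjunct1], of g E] l2_translate2[OF f, of g] by simp
      then have "(L2_set (\<lambda>x. cmod (f (- g + x))) E)\<^sup>2 \<le> (l2norm f)\<^sup>2" by (simp add: power_mono)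
      then have "(\<Sum>x\<in>E. (cmod (f (- g + x)))\<^sup>2) \<le> (l2norm f)\<^sup>2"
        unfolding L2_set_def by (simp add: sum_nonneg)
      then show "(\<Sum>x\<in>E. cmod (b g) * (cmod (f (- g + x)))\<^sup>2) \<le> cmod (b g) * (l2norm f)\<^sup>2"
        by (simp add: sum_distrib_left[symmetric] mult_left_mono)
    qed
    also have "\<dots> = (N * l2norm f)\<^sup>2"
      by (simp add: infsum_cmult_left' N_def power_mult_distrib power2_eq_square)
    finally have "(L2_set (\<lambda>x. cmod (conv b f x)) E)\<^sup>2 \<le> (N * l2norm f)\<^sup>2"
      unfolding L2_set_def by (simp add: sum_nonneg)
    then show "L2_set (\<lambda>x. cmod (conv b f x)) E \<le> N * l2norm f"
      using N0 by (simp add: power2_le_iff_abs_le)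
  qed
qed



lemma bdd_op_zero: assumes "bdd_op T" shows "T (\<lambda>_. 0) = (\<lambda>_. 0)"
proof -
  have lin: "\<forall>f\<in>l2. \<forall>h\<in>l2. \<forall>c. T (\<lambda>x. f x + c * h x) = (\<lambda>x. T f x + c * T h x)"
    using assms unfolding bdd_op_def by blast
  have "T (\<lambda>_. 0) = (\<lambda>x. T (\<lambda>_. 0) x + T (\<lambda>_. 0) x)"
    using lin[rule_format, OF l2_zero l2_zero, of 1] by simp
  then show ?thesis by (auto simp: fun_eq_iff)
qed

lemma bdd_op_lin: assumes "bdd_op T" "f \<in> l2" "h \<in> l2"
  shows "T (\<lambda>x. f x + c * h x) = (\<lambda>x. T f x + c * T h x)"
  using assms unfolding bdd_op_def by blast

lemma bdd_op_scale: assumes "bdd_op T" "f \<in> l2"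
  shows "T (\<lambda>x. c * f x) = (\<lambda>x. c * T f x)"
  using bdd_op_lin[OF assms(1) l2_zero assms(2), of c] bdd_op_zero[OF assms(1)] by simp

lemma bdd_op_l2: "bdd_op T \<Longrightarrow> f \<in> l2 \<Longrightarrow> T f \<in> l2"
  unfolding bdd_op_def by blast

lemma bdd_op_out: "bdd_op T \<Longrightarrow> f \<notin> l2 \<Longrightarrow> T f = (\<lambda>_. 0)"
  unfolding bdd_op_def by blast

lemma opnorm_upper:
  fixes X :: "'a op"
  assumes "bdd_op X" "f \<in> l2" "l2norm f \<le> 1"
  shows "l2norm (X f) \<le> opnorm X"
proof -
  obtain K where K: "\<forall>f\<in>l2. l2norm (X f) \<le> K * l2norm f" using assms(1) unfolding bdd_op_def by blast
  have "bdd_above ((\<lambda>f. l2norm (X f)) ` {f \<in> l2. l2norm f \<le> 1})"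
  proof (rule bdd_aboveI2)
    fix g :: "'a vec" assume g: "g \<in> {f \<in> l2. l2norm f \<le> 1}"
    have "l2norm (X g) \<le> K * l2norm g" using K g by blast
    also have "\<dots> \<le> \<bar>K\<bar> * l2norm g" by (simp add: mult_right_mono)
    also have "\<dots> \<le> \<bar>K\<bar>" using g by (simp add: mult_left_le)
    finally show "l2norm (X g) \<le> \<bar>K\<bar>" .
  qed
  then show ?thesis unfolding opnorm_def by (rule cSup_upper[rotated]) (use assms in auto)
qed

lemma opnorm_nonneg: "bdd_op X \<Longrightarrow> 0 \<le> opnorm X"
  using opnorm_upper[of X "\<lambda>_. 0"] by (simp add: bdd_op_zero)

lemma opnorm_bound:
  assumes "bdd_op X" "f \<in> l2"
  shows "l2norm (X f) \<le> opnorm X * l2norm f"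
proof (cases "l2norm f = 0")
  case True
  obtain K where K: "\<forall>f\<in>l2. l2norm (X f) \<le> K * l2norm f" using assms(1) unfolding bdd_op_def by blast
  then have "l2norm (X f) \<le> 0" using True assms(2) by force
  then show ?thesis using True by simp
next
  case False
  define n where "n = l2norm f"
  have n: "0 < n" using False n_def l2norm_nonneg[of f] by linarith
  define c where "c = complex_of_real (1 / n)"
  have cn: "cmod c = 1 / n" using n by (simp add: c_def norm_divide)
  define g where "g = (\<lambda>x. c * f x)"
  have g: "g \<in> l2" "l2norm g = 1" using l2_scale[OF assms(2), of c] n cn
    by (auto simp: g_def n_def)
  have "X g = (\<lambda>x. c * X f x)" unfolding g_def by (rule bdd_op_scale[OF assms])
  then have "l2norm (X g) = (1/n) * l2norm (X f)"
    using l2_scale[OF bdd_op_l2[OF assms], of c] cn by simp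
  moreover have "l2norm (X g) \<le> opnorm X" by (rule opnorm_upper[OF assms(1) g(1)]) (simp add: g)
  ultimately show ?thesis using n by (simp add: n_def field_simps)
qed

lemma opnorm_least:
  assumes "\<And>f. f \<in> l2 \<Longrightarrow> l2norm f \<le> 1 \<Longrightarrow> l2norm (X f) \<le> B"
  shows "opnorm X \<le> B"
  unfolding opnorm_def by (rule cSup_least) (use assms in \<open>auto intro: l2_zero\<close>)

lemma bdd_op_Conv:
  fixes b :: "'a::group_add \<Rightarrow> complex"
  assumes "b \<in> l2" "opb (conv b) K"
  shows "bdd_op (Conv b) \<and> opb (Conv b) K"
proof -
  have "\<forall>f\<in>l2. \<forall>h\<in>l2. \<forall>c. Conv b (\<lambda>x. f x + c * h x) = (\<lambda>x. Conv b f x + c * Conv b h x)"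
  proof (intro ballI allI)
    fix f h :: "'a vec" and c assume fh: "f \<in> l2" "h \<in> l2"
    have "(\<lambda>x. f x + c * h x) \<in> l2" using l2_lin[OF fh] by blast
    then show "Conv b (\<lambda>x. f x + c * h x) = (\<lambda>x. Conv b f x + c * Conv b h x)"
      using conv_lin_f[OF assms(1) fh] fh by (simp add: Conv_def)
  qed
  then show ?thesis using assms(2) unfolding bdd_op_def opb_def Conv_def by auto
qed

lemma bdd_op_lin2:
  assumes "bdd_op T" "bdd_op S"
  shows "bdd_op (\<lambda>f x. T f x + c * S f x)"
proof -
  obtain K1 where K1: "\<forall>f\<in>l2. l2norm (T f) \<le> K1 * l2norm f" using assms(1) unfolding bdd_op_def by blast
  obtain K2 where K2: "\<forall>f\<in>l2. l2norm (S f) \<le> K2 * l2norm f" using assms(2) unfolding bdd_op_def by blast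
  have l: "(\<lambda>x. T f x + c * S f x) \<in> l2" if "f \<in> l2" for f
    using l2_lin[OF bdd_op_l2[OF assms(1) that] bdd_op_l2[OF assms(2) that]] by blast
  have b: "l2norm (\<lambda>x. T f x + c * S f x) \<le> (K1 + cmod c * K2) * l2norm f" if "f \<in> l2" for f
  proof -
    have "l2norm (\<lambda>x. T f x + c * S f x) \<le> l2norm (T f) + cmod c * l2norm (S f)"
      using l2_lin[OF bdd_op_l2[OF assms(1) that] bdd_op_l2[OF assms(2) that]] by blast
    also have "\<dots> \<le> K1 * l2norm f + cmod c * (K2 * l2norm f)"
      using K1 K2 that by (intro add_mono mult_left_mono) auto
    finally show ?thesis by (simp add: algebra_simps)
  qed
  have lin: "(\<lambda>x. T (\<lambda>x. f x + d * h x) x + c * S (\<lambda>x. f x + d * h x) x) =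
     (\<lambda>x. (T f x + c * S f x) + d * (T h x + c * S h x))" if "f \<in> l2" "h \<in> l2" for f h d
    using bdd_op_lin[OF assms(1) that, of d] bdd_op_lin[OF assms(2) that, of d]
    by (simp add: algebra_simps)
  show ?thesis unfolding bdd_op_def using l b lin bdd_op_out[OF assms(1)] bdd_op_out[OF assms(2)]
    by auto
qed

lemma fin_l1: "finite {g. k g \<noteq> 0} \<Longrightarrow> (\<lambda>g. cmod (k g)) summable_on UNIV"
proof -
  assume a: "finite {g. k g \<noteq> 0}"
  have "(\<lambda>g. cmod (k g)) summable_on {g. k g \<noteq> 0}" using a by simp
  moreover have "(\<lambda>g. cmod (k g)) summable_on {g. k g \<noteq> 0} \<longleftrightarrow> (\<lambda>g. cmod (k g)) summable_on UNIV"
    by (rule summable_on_cong_neutral) auto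
  ultimately show ?thesis by simp
qed

lemma bdd_op_grop:
  assumes "finite G"
  shows "bdd_op (grop G c)"
proof -
  define k where "k = (\<lambda>g. if g \<in> G then c g else 0)"
  have fk: "finite {g. k g \<noteq> 0}" using assms by (rule finite_subset[rotated]) (auto simp: k_def)
  have "opb (conv k) (\<Sum>\<^sub>\<infinity>g. cmod (k g))" unfolding opb_def using C2[OF fin_l1[OF fk]] by blast
  then show ?thesis using bdd_op_Conv[OF l2_fin[OF fk]] grop_Conv[OF assms] by (simp add: k_def)
qed

lemma Cred_grop:
  assumes "finite G"
  shows "grop G c \<in> Cred"
proof -
  have "opnorm (\<lambda>f x. grop G c f x - grop G c f x) \<le> 0"
    by (rule opnorm_least) simp
  then show ?thesis unfolding Cred_def using bdd_op_grop[OF assms] assms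
    by (auto intro!: exI[of _ G] exI[of _ c])
qed

lemma Cred_bdd: "T \<in> Cred \<Longrightarrow> bdd_op T"
  unfolding Cred_def by blast

lemma diff_op_eq: fixes T S :: "'a op" shows "(\<lambda>f x. T f x - S f x) = (\<lambda>f x. T f x + (-1) * S f x)"
  by (auto simp: fun_eq_iff algebra_simps)

lemma Cred_approx:
  assumes "T \<in> Cred" "e > 0"
  obtains G c where "finite G" "opnorm (\<lambda>f x. T f x - grop G c f x) < e"
    "bdd_op (\<lambda>f x. T f x - grop G c f x)"
proof -
  obtain G c where "finite G" "opnorm (\<lambda>f x. T f x - grop G c f x) < e"
    using assms unfolding Cred_def by blast
  moreover have "bdd_op (\<lambda>f x. T f x - grop G c f x)"
    unfolding diff_op_eq by (rule bdd_op_lin2[OF Cred_bdd[OF assms(1)] bdd_op_grop[OF \<open>finite G\<close>]])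
  ultimately show ?thesis using that by blast
qed

lemma conv_diff:
  assumes "b \<in> l2" "b' \<in> l2" "f \<in> l2"
  shows "conv b f x - conv b' f x = conv (\<lambda>g. b g - b' g) f x"
  using conv_lin_b[OF assms, of "-1"] by (simp add: fun_eq_iff)

lemma C1:
  assumes T: "T \<in> Cred" and f: "f \<in> l2"
  shows "T f = conv (T (delta 0)) f"
proof
  fix x
  define a where "a = T (delta 0)"
  have a: "a \<in> l2" unfolding a_def by (rule bdd_op_l2[OF Cred_bdd[OF T]]) simp
  define n where "n = l2norm f"
  have n0: "0 \<le> n" by (simp add: n_def)
  have "cmod (T f x - conv a f x) \<le> e" if e: "e > 0" for e
  proof -
    define e' where "e' = e / (2 * (n + 1))"
    have e': "e' > 0" using e n0 by (simp add: e'_def)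
    obtain G c where G: "finite G" and op: "opnorm (\<lambda>f x. T f x - grop G c f x) < e'"
      and bX: "bdd_op (\<lambda>f x. T f x - grop G c f x)"
      using Cred_approx[OF T e'] by blast
    define X where "X = (\<lambda>f x. T f x - grop G c f x)"
    define k where "k = (\<lambda>g. if g \<in> G then c g else 0)"
    have fk: "finite {g. k g \<noteq> 0}" using G by (rule finite_subset[rotated]) (auto simp: k_def)
    have k: "k \<in> l2" by (rule l2_fin[OF fk])
    have P: "grop G c h = conv k h" if "h \<in> l2" for h
      using grop_Conv[OF G, of c] that by (simp add: Conv_def k_def)
    have Xf: "X f x = T f x - conv k f x" using P[OF f] by (simp add: X_def)
    have "cmod (X f x) \<le> l2norm (X f)"
      by (rule l2_pointwise, rule bdd_op_l2[OF bX[folded X_def] f])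
    also have "\<dots> \<le> opnorm X * n" unfolding n_def by (rule opnorm_bound[OF bX[folded X_def] f])
    also have "\<dots> \<le> e' * n" using op n0 by (simp add: X_def mult_right_mono)
    finally have 1: "cmod (T f x - conv k f x) \<le> e' * n" using Xf by simp
    have Xd: "X (delta 0) = (\<lambda>g. a g - k g)"
      using P[of "delta 0"] by (simp add: X_def a_def conv_delta0)
    have "l2norm (X (delta 0)) \<le> opnorm X * 1"
      using opnorm_bound[OF bX[folded X_def], of "delta 0"] by simp
    then have 2: "l2norm (\<lambda>g. a g - k g) \<le> e'" using op Xd by (simp add: X_def)
    have "cmod (conv k f x - conv a f x) = cmod (conv (\<lambda>g. a g - k g) f x)"
      using conv_diff[OF a k f, of x] by (simp add: norm_minus_commute)
    also have "\<dots> \<le> l2norm (\<lambda>g. a g - k g) * n"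
      unfolding n_def by (rule conv_summ[OF l2_diff[OF a k, THEN conjunct1] f, THEN conjunct2])
    also have "\<dots> \<le> e' * n" using 2 n0 by (simp add: mult_right_mono)
    finally have 3: "cmod (conv k f x - conv a f x) \<le> e' * n" .
    have "cmod (T f x - conv a f x) \<le> cmod (T f x - conv k f x) + cmod (conv k f x - conv a f x)"
      using norm_triangle_ineq[of "T f x - conv k f x" "conv k f x - conv a f x"] by simp
    also have "\<dots> \<le> 2 * e' * n" using 1 3 by simp
    also have "\<dots> \<le> e" using e n0 by (simp add: e'_def field_simps)
    finally show ?thesis .
  qed
  then have "cmod (T f x - conv a f x) = 0"
    by (metis dense_ge norm_ge_zero order.antisym)
  then show "T f x = conv (T (delta 0)) f x" by (simp add: a_def)
qed

lemma Cred_lin: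
  assumes T: "T \<in> Cred" and S: "S \<in> Cred"
  shows "(\<lambda>f x. T f x + c * S f x) \<in> Cred"
proof -
  have bd: "bdd_op (\<lambda>f x. T f x + c * S f x)" by (rule bdd_op_lin2[OF Cred_bdd[OF T] Cred_bdd[OF S]])
  have "\<exists>G d. finite G \<and> opnorm (\<lambda>f x. T f x + c * S f x - grop G d f x) < e" if e: "e > 0" for e
  proof -
    obtain G1 c1 where G1: "finite G1" and op1: "opnorm (\<lambda>f x. T f x - grop G1 c1 f x) < e/4"
      and b1: "bdd_op (\<lambda>f x. T f x - grop G1 c1 f x)"
      using Cred_approx[OF T, of "e/4"] e by auto
    have "0 < cmod c + 1" using norm_ge_zero[of c] by linarith
    then have pos: "0 < e/(4*(cmod c + 1))" using e by (intro divide_pos_pos) auto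
    obtain G2 c2 where G2: "finite G2" and op2: "opnorm (\<lambda>f x. S f x - grop G2 c2 f x) < e/(4*(cmod c + 1))"
      and b2: "bdd_op (\<lambda>f x. S f x - grop G2 c2 f x)"
      using Cred_approx[OF S pos] by blast
    define k1 where "k1 = (\<lambda>g. if g \<in> G1 then c1 g else 0)"
    define k2 where "k2 = (\<lambda>g. if g \<in> G2 then c2 g else 0)"
    define d where "d = (\<lambda>g. k1 g + c * k2 g)"
    define G where "G = G1 \<union> G2"
    have G: "finite G" using G1 G2 by (simp add: G_def)
    have k1: "k1 \<in> l2" by (rule l2_fin, rule finite_subset[OF _ G1]) (auto simp: k1_def)
    have k2: "k2 \<in> l2" by (rule l2_fin, rule finite_subset[OF _ G2]) (auto simp: k2_def)
    have dk: "(\<lambda>g. if g \<in> G then d g else 0) = d"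
      by (auto simp: fun_eq_iff d_def k1_def k2_def G_def)
    have eq: "grop G d f = (\<lambda>x. grop G1 c1 f x + c * grop G2 c2 f x)" for f
    proof (cases "f \<in> l2")
      case True
      then show ?thesis
        using grop_Conv[OF G, of d] grop_Conv[OF G1, of c1] grop_Conv[OF G2, of c2] conv_lin_b[OF k1 k2 True, of c]
        by (simp add: dk Conv_def k1_def k2_def d_def)
    next
      case False then show ?thesis by (simp add: grop_def)
    qed
    define X where "X = (\<lambda>f x. T f x + c * S f x - grop G d f x)"
    have bound: "l2norm (X f) \<le> e/2" if f: "f \<in> l2" "l2norm f \<le> 1" for f
    proof -
      let ?X1 = "(\<lambda>f x. T f x - grop G1 c1 f x)" and ?X2 = "(\<lambda>f x. S f x - grop G2 c2 f x)"
      have "X f = (\<lambda>x. ?X1 f x + c * ?X2 f x)" by (simp add: X_def eq algebra_simps)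
      then have "l2norm (X f) \<le> l2norm (?X1 f) + cmod c * l2norm (?X2 f)"
        using l2_lin[OF bdd_op_l2[OF b1 f(1)] bdd_op_l2[OF b2 f(1)], of c] by simp
      also have "\<dots> \<le> opnorm ?X1 * l2norm f + cmod c * (opnorm ?X2 * l2norm f)"
        by (intro add_mono mult_left_mono opnorm_bound b1 b2 f) auto
      also have "\<dots> \<le> opnorm ?X1 + cmod c * opnorm ?X2"
        using f opnorm_nonneg[OF b1] opnorm_nonneg[OF b2]
        by (intro add_mono mult_left_mono) (auto simp: mult_left_le)
      also have "\<dots> \<le> e/4 + cmod c * (e / (4 * (cmod c + 1)))"
        using op1 op2 by (intro add_mono mult_left_mono) auto
      also have "\<dots> \<le> e/2"
      proof -
        have c1: "0 < cmod c + 1" using norm_ge_zero[of c] by linarith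
        have q: "cmod c / (cmod c + 1) \<le> 1" using c1 by (simp add: divide_le_eq)
        have "cmod c * (e / (4 * (cmod c + 1))) = (e/4) * (cmod c / (cmod c + 1))" by simp
        also have "\<dots> \<le> (e/4) * 1" by (rule mult_left_mono[OF q]) (use e in simp)
        finally have "cmod c * (e / (4 * (cmod c + 1))) \<le> e/4" by simp
        then show ?thesis by linarith
      qed
      finally show ?thesis .
    qed
    have "opnorm X \<le> e/2" by (rule opnorm_least) (rule bound)
    then have "opnorm X < e" using e by simp
    then show ?thesis using G unfolding X_def by blast
  qed
  then show ?thesis using bd unfolding Cred_def by blast
qed



lemma conv_finsupp:
  fixes f :: "'g::group_add vec"
  assumes "finite S" "\<And>y. y \<notin> S \<Longrightarrow> f y = 0"
  shows "conv \<beta> f x = (\<Sum>y\<in>S. \<beta> (x + - y) * f y)"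
proof -
  have "conv \<beta> f x = (\<Sum>\<^sub>\<infinity>y. \<beta> (x + - y) * f (- (x + - y) + x))"
    unfolding conv_def using infsum_reindex_bij_betw[OF bij_addr_neg[of x], of "\<lambda>g. \<beta> g * f (- g + x)"]
    by simp
  also have "\<dots> = (\<Sum>\<^sub>\<infinity>y. \<beta> (x + - y) * f y)"
    by (simp add: minus_add add.assoc)
  also have "\<dots> = (\<Sum>\<^sub>\<infinity>y\<in>S. \<beta> (x + - y) * f y)"
    by (rule infsum_cong_neutral) (use assms in auto)
  finally show ?thesis using assms by simp
qed

lemma l2inner_finsupp:
  assumes "finite S" "\<And>y. y \<notin> S \<Longrightarrow> u y = 0"
  shows "l2inner u w = (\<Sum>x\<in>S. cnj (u x) * w x)"
proof -
  have "l2inner u w = (\<Sum>\<^sub>\<infinity>x\<in>S. cnj (u x) * w x)"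
    unfolding l2inner_def by (rule infsum_cong_neutral) (use assms in auto)
  then show ?thesis using assms by simp
qed

lemma adj_pair:
  fixes f u :: "'g::group_add vec"
  assumes "finite Sf" "\<And>y. y \<notin> Sf \<Longrightarrow> f y = 0" "finite Su" "\<And>y. y \<notin> Su \<Longrightarrow> u y = 0"
  shows "l2inner u (conv (adj \<beta>) f) = cnj (l2inner f (conv \<beta> u))"
proof -
  have "l2inner u (conv (adj \<beta>) f) = (\<Sum>x\<in>Su. cnj (u x) * (\<Sum>y\<in>Sf. cnj (\<beta> (y + - x)) * f y))"
    by (simp add: l2inner_finsupp[OF assms(3,4)] conv_finsupp[OF assms(1,2)] adj_def minus_add)
  also have "\<dots> = (\<Sum>x\<in>Su. \<Sum>y\<in>Sf. cnj (u x) * cnj (\<beta> (y + - x)) * f y)"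
    by (simp add: sum_distrib_left mult.assoc)
  also have "\<dots> = (\<Sum>y\<in>Sf. \<Sum>x\<in>Su. cnj (u x) * cnj (\<beta> (y + - x)) * f y)"
    by (rule sum.swap)
  also have "\<dots> = cnj (l2inner f (conv \<beta> u))"
    by (simp add: l2inner_finsupp[OF assms(1,2)] conv_finsupp[OF assms(3,4)] sum_distrib_left mult_ac)
  finally show ?thesis .
qed

lemma l2inner_bound:
  assumes "f \<in> l2" "h \<in> l2"
  shows "cmod (l2inner f h) \<le> l2norm f * l2norm h"
  unfolding l2inner_def by (rule CS[OF assms, THEN conjunct2]) (simp add: norm_mult)

lemma l2inner_summ:
  assumes "f \<in> l2" "h \<in> l2"
  shows "(\<lambda>x. cnj (f x) * h x) summable_on UNIV"
  by (rule CS[OF assms, THEN conjunct1]) (simp add: norm_mult)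

lemma trunc_norm:
  assumes "finite E"
  shows "(\<lambda>x. if x \<in> E then w x else 0) \<in> l2 \<and> l2norm (\<lambda>x. if x \<in> E then w x else 0) = L2_set (\<lambda>x. cmod (w x)) E"
proof
  show "(\<lambda>x. if x \<in> E then w x else 0) \<in> l2"
    by (rule l2_fin, rule finite_subset[OF _ assms]) auto
  have "(\<Sum>\<^sub>\<infinity>x. (cmod (if x \<in> E then w x else 0))\<^sup>2) = (\<Sum>\<^sub>\<infinity>x\<in>E. (cmod (w x))\<^sup>2)"
    by (rule infsum_cong_neutral) auto
  then show "l2norm (\<lambda>x. if x \<in> E then w x else 0) = L2_set (\<lambda>x. cmod (w x)) E"
    using assms by (simp add: l2norm_def L2_set_def)
qed

lemma tail_approx:
  assumes f: "f \<in> l2" and d: "d > 0"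
  shows "\<exists>F. finite F \<and> l2norm (\<lambda>x. f x - (if x \<in> F then f x else 0)) \<le> d"
proof -
  have s: "(\<lambda>x. (cmod (f x))\<^sup>2) summable_on UNIV" using f by (simp add: l2_def)
  obtain F where F: "finite F" and dist: "dist (\<Sum>x\<in>F. (cmod (f x))\<^sup>2) (\<Sum>\<^sub>\<infinity>x. (cmod (f x))\<^sup>2) \<le> d\<^sup>2"
    using infsum_finite_approximation[OF s, of "d\<^sup>2"] d by auto
  have "l2norm (\<lambda>x. f x - (if x \<in> F then f x else 0)) \<le> d"
  proof (rule l2_FS[THEN conjunct2])
    fix E :: "'a set" assume E: "finite E"
    have "(\<Sum>x\<in>E. (cmod (f x - (if x \<in> F then f x else 0)))\<^sup>2) = (\<Sum>x\<in>E - F. (cmod (f x))\<^sup>2)"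
      by (rule sum.mono_neutral_cong_right) (use E in auto)
    also have "\<dots> = (\<Sum>x\<in>(E - F) \<union> F. (cmod (f x))\<^sup>2) - (\<Sum>x\<in>F. (cmod (f x))\<^sup>2)"
    proof -
      have "(\<Sum>x\<in>(E - F) \<union> F. (cmod (f x))\<^sup>2) = (\<Sum>x\<in>E - F. (cmod (f x))\<^sup>2) + (\<Sum>x\<in>F. (cmod (f x))\<^sup>2)"
        by (rule sum.union_disjoint) (use E F in auto)
      then show ?thesis by simp
    qed
    also have "\<dots> \<le> (\<Sum>\<^sub>\<infinity>x. (cmod (f x))\<^sup>2) - (\<Sum>x\<in>F. (cmod (f x))\<^sup>2)"
      using finite_sum_le_infsum[OF s, of "(E - F) \<union> F"] E F by auto
    also have "\<dots> \<le> d\<^sup>2" using dist by (simp add: dist_real_def)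
    finally have "(L2_set (\<lambda>x. cmod (f x - (if x \<in> F then f x else 0))) E)\<^sup>2 \<le> d\<^sup>2"
      by (simp add: L2_set_def sum_nonneg)
    then show "L2_set (\<lambda>x. cmod (f x - (if x \<in> F then f x else 0))) E \<le> d"
      using d by (simp add: power2_le_iff_abs_le)
  qed
  then show ?thesis using F by blast
qed

lemma trunc_le:
  assumes "f \<in> l2"
  shows "(\<lambda>x. if x \<in> F then f x else 0) \<in> l2 \<and> l2norm (\<lambda>x. if x \<in> F then f x else 0) \<le> l2norm f"
  using l2_compare[OF assms, of "\<lambda>x. if x \<in> F then f x else 0" 1] by simp

lemma adj_l2:
  fixes b :: "'g::group_add \<Rightarrow> complex"
  assumes "b \<in> l2"
  shows "adj b \<in> l2 \<and> l2norm (adj b) = l2norm b"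
proof -
  have bij: "bij (uminus :: 'g \<Rightarrow> 'g)" by (rule bij_betwI') (auto intro: exI[of _ "- _"])
  have "(\<lambda>x. b (- x)) \<in> l2 \<and> l2norm (\<lambda>x. b (- x)) = l2norm b" by (rule l2_bij[OF bij assms])
  then show ?thesis by (simp add: adj_def l2_def l2norm_def)
qed

lemma adj_bound:
  fixes \<beta> :: "'g::group_add \<Rightarrow> complex"
  assumes \<beta>: "\<beta> \<in> l2" and K: "0 \<le> K" and op: "opb (conv \<beta>) K"
  shows "opb (conv (adj \<beta>)) K"
proof -
  have fin: "conv (adj \<beta>) f \<in> l2 \<and> l2norm (conv (adj \<beta>) f) \<le> K * l2norm f"
    if S: "finite S" "\<And>y. y \<notin> S \<Longrightarrow> f y = 0" for f S
  proof (rule l2_FS)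
    fix E :: "'g set" assume E: "finite E"
    define w where "w = conv (adj \<beta>) f"
    define u where "u = (\<lambda>x. if x \<in> E then w x else 0)"
    define L where "L = L2_set (\<lambda>x. cmod (w x)) E"
    have u: "u \<in> l2" "l2norm u = L" using trunc_norm[OF E, of w] by (auto simp: u_def L_def)
    have f: "f \<in> l2" by (rule l2_fin, rule finite_subset[OF _ S(1)]) (use S in auto)
    have "l2inner u w = (\<Sum>x\<in>E. cnj (u x) * w x)"
      by (rule l2inner_finsupp[OF E]) (simp add: u_def)
    also have "\<dots> = (\<Sum>x\<in>E. complex_of_real ((cmod (w x))\<^sup>2))"
      by (rule sum.cong) (use complex_norm_square in \<open>auto simp: u_def mult.commute\<close>)
    also have "\<dots> = complex_of_real (L\<^sup>2)" by (simp add: L_def L2_set_def sum_nonneg)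
    finally have uw: "l2inner u w = complex_of_real (L\<^sup>2)" .
    have uz: "\<And>y. y \<notin> E \<Longrightarrow> u y = 0" by (simp add: u_def)
    have "l2inner u w = cnj (l2inner f (conv \<beta> u))"
      unfolding w_def by (rule adj_pair[OF S E uz])
    then have "L\<^sup>2 = cmod (l2inner f (conv \<beta> u))" using uw by (metis complex_mod_cnj norm_of_real abs_power2)
    also have "\<dots> \<le> l2norm f * l2norm (conv \<beta> u)"
      by (rule l2inner_bound[OF f]) (use op u in \<open>simp add: opb_def\<close>)
    also have "\<dots> \<le> l2norm f * (K * L)"
      using op u by (intro mult_left_mono) (auto simp: opb_def)
    finally have LL: "L * L \<le> (K * l2norm f) * L" by (simp add: power2_eq_square mult_ac)
    have L0: "0 \<le> L" by (simp add: L_def)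
    show "L2_set (\<lambda>x. cmod (conv (adj \<beta>) f x)) E \<le> K * l2norm f"
    proof (cases "L = 0")
      case True then show ?thesis using K by (simp add: L_def w_def)
    next
      case False then have "0 < L" using L0 by simp
      then show ?thesis using LL by (simp add: L_def w_def)
    qed
  qed
  have adjb: "adj \<beta> \<in> l2" "l2norm (adj \<beta>) = l2norm \<beta>" using adj_l2[OF \<beta>] by auto
  show ?thesis unfolding opb_def
  proof (intro ballI)
    fix f :: "'g vec" assume f: "f \<in> l2"
    define w where "w = conv (adj \<beta>) f"
    have "L2_set (\<lambda>x. cmod (w x)) E \<le> K * l2norm f" if E: "finite E" for E :: "'g set"
    proof (rule field_le_epsilon)
      fix e :: real assume e: "0 < e"
      define d where "d = e / (sqrt (real (card E)) * l2norm \<beta> + 1)"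
      have dpos: "0 < d" using e by (simp add: d_def add_nonneg_pos)
      obtain F where F: "finite F" and tail: "l2norm (\<lambda>x. f x - (if x \<in> F then f x else 0)) \<le> d"
        using tail_approx[OF f dpos] by blast
      define fF :: "'g vec" where "fF = (\<lambda>x. if x \<in> F then f x else 0)"
      have fF: "fF \<in> l2" "l2norm fF \<le> l2norm f" using trunc_le[OF f] by (auto simp: fF_def)
      have r: "(\<lambda>x. f x - fF x) \<in> l2" using l2_diff[OF f fF(1)] by blast
      define wF where "wF = conv (adj \<beta>) fF"
      have wF: "wF \<in> l2" "l2norm wF \<le> K * l2norm fF"
        using fin[OF F, of fF] by (auto simp: fF_def wF_def)
      have pt: "cmod (w x) \<le> cmod (wF x) + l2norm \<beta> * d" for x
      proof -
        have "w x - wF x = conv (adj \<beta>) (\<lambda>y. f y - fF y) x"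
          using conv_lin_f[OF adjb(1) f fF(1), of "-1"] by (simp add: w_def wF_def fun_eq_iff)
        then have "cmod (w x - wF x) \<le> l2norm \<beta> * l2norm (\<lambda>y. f y - fF y)"
          using conv_summ[OF adjb(1) r, of x] adjb(2) by simp
        also have "\<dots> \<le> l2norm \<beta> * d" using tail by (intro mult_left_mono) (auto simp: fF_def)
        finally show ?thesis using norm_triangle_ineq2[of "w x" "wF x"] by linarith
      qed
      have "L2_set (\<lambda>x. cmod (w x)) E \<le> L2_set (\<lambda>x. cmod (wF x) + l2norm \<beta> * d) E"
        by (rule L2_set_mono) (use pt in auto)
      also have "\<dots> \<le> L2_set (\<lambda>x. cmod (wF x)) E + L2_set (\<lambda>x. l2norm \<beta> * d) E"
        by (rule L2_set_triangle_ineq)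
      also have "\<dots> \<le> K * l2norm f + sqrt (real (card E)) * (l2norm \<beta> * d)"
      proof (rule add_mono)
        have "L2_set (\<lambda>x. cmod (wF x)) E \<le> l2norm wF" by (rule l2_FS'[OF wF(1)])
        also have "\<dots> \<le> K * l2norm fF" by (rule wF(2))
        also have "\<dots> \<le> K * l2norm f" using fF(2) K by (rule mult_left_mono)
        finally show "L2_set (\<lambda>x. cmod (wF x)) E \<le> K * l2norm f" .
        show "L2_set (\<lambda>x. l2norm \<beta> * d) E \<le> sqrt (real (card E)) * (l2norm \<beta> * d)"
          using dpos by (simp add: L2_set_constant)
      qed
      also have "\<dots> \<le> K * l2norm f + e"
      proof -
        have "sqrt (real (card E)) * (l2norm \<beta> * d) = (sqrt (real (card E)) * l2norm \<beta>) * d" by simp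
        also have "\<dots> \<le> (sqrt (real (card E)) * l2norm \<beta> + 1) * d" using dpos by (simp add: mult_right_mono)
        also have "\<dots> = e"
        proof -
          have "0 < sqrt (real (card E)) * l2norm \<beta> + 1" by (simp add: add_nonneg_pos)
          then show ?thesis unfolding d_def by simp
        qed
        finally show ?thesis by simp
      qed
      finally show "L2_set (\<lambda>x. cmod (w x)) E \<le> K * l2norm f + e" .
    qed
    then show "conv (adj \<beta>) f \<in> l2 \<and> l2norm (conv (adj \<beta>) f) \<le> K * l2norm f"
      unfolding w_def by (rule l2_FS)
  qed
qed



lemma l2inner_lin2:
  assumes "f \<in> l2" "u \<in> l2" "v \<in> l2"
  shows "l2inner f (\<lambda>x. u x + c * v x) = l2inner f u + c * l2inner f v"
proof -
  have s1: "(\<lambda>x. cnj (f x) * u x) summable_on UNIV" by (rule l2inner_summ[OF assms(1,2)])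
  have s2: "(\<lambda>x. c * (cnj (f x) * v x)) summable_on UNIV"
    by (rule summable_on_cmult_right, rule l2inner_summ[OF assms(1,3)])
  have "l2inner f (\<lambda>x. u x + c * v x) = (\<Sum>\<^sub>\<infinity>x. cnj (f x) * u x + c * (cnj (f x) * v x))"
    unfolding l2inner_def by (simp add: algebra_simps)
  also have "\<dots> = l2inner f u + c * l2inner f v"
    unfolding infsum_add[OF s1 s2] l2inner_def by (simp add: infsum_cmult_right')
  finally show ?thesis .
qed

lemma l2inner_diff:
  assumes f: "f \<in> l2" and w: "w \<in> l2" and f': "f' \<in> l2" and w': "w' \<in> l2"
  shows "l2inner f w - l2inner f' w' = l2inner (\<lambda>x. f x - f' x) w + l2inner f' (\<lambda>x. w x - w' x)"
proof -
  have d1: "(\<lambda>x. f x - f' x) \<in> l2" using l2_diff[OF f f'] by blast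
  have d2: "(\<lambda>x. w x - w' x) \<in> l2" using l2_diff[OF w w'] by blast
  have sA: "(\<lambda>x. cnj (f x - f' x) * w x) summable_on UNIV" using l2inner_summ[OF d1 w] by simp
  have sB: "(\<lambda>x. cnj (f' x) * (w x - w' x)) summable_on UNIV" using l2inner_summ[OF f' d2] by simp
  have sC: "(\<lambda>x. cnj (f' x) * w' x) summable_on UNIV" using l2inner_summ[OF f' w'] by simp
  have sAB: "(\<lambda>x. cnj (f x - f' x) * w x + cnj (f' x) * (w x - w' x)) summable_on UNIV"
    by (rule summable_on_add[OF sA sB])
  have "l2inner f w = (\<Sum>\<^sub>\<infinity>x. (cnj (f x - f' x) * w x + cnj (f' x) * (w x - w' x)) + cnj (f' x) * w' x)"
    unfolding l2inner_def by (rule infsum_cong) (simp add: algebra_simps)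
  also have "\<dots> = (\<Sum>\<^sub>\<infinity>x. cnj (f x - f' x) * w x) + (\<Sum>\<^sub>\<infinity>x. cnj (f' x) * (w x - w' x)) + l2inner f' w'"
    unfolding infsum_add[OF sAB sC] infsum_add[OF sA sB] l2inner_def ..
  finally show ?thesis unfolding l2inner_def by simp
qed

lemma herm_real:
  fixes h :: "'g::group_add \<Rightarrow> complex"
  assumes h: "h \<in> l2" and K: "0 \<le> K" and op: "opb (conv h) K"
    and sym: "\<And>g. h (- g) = cnj (h g)" and f: "f \<in> l2"
  shows "Im (l2inner f (conv h f)) = 0"
proof -
  have fin: "Im (l2inner u (conv h u)) = 0" if S: "finite S" "\<And>y. y \<notin> S \<Longrightarrow> u y = 0" for u S
  proof -
    have Q: "l2inner u (conv h u) = (\<Sum>x\<in>S. \<Sum>y\<in>S. cnj (u x) * h (x + - y) * u y)"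
      by (simp add: l2inner_finsupp[OF S] conv_finsupp[OF S] sum_distrib_left mult.assoc)
    have cj: "cnj (h (x - y)) = h (y - x)" for x y
      using sym[of "x - y"] by simp
    have "cnj (l2inner u (conv h u)) = (\<Sum>x\<in>S. \<Sum>y\<in>S. u x * h (y + - x) * cnj (u y))"
      unfolding Q by (simp add: cj)
    also have "\<dots> = (\<Sum>y\<in>S. \<Sum>x\<in>S. u x * h (y + - x) * cnj (u y))" by (rule sum.swap)
    also have "\<dots> = l2inner u (conv h u)" unfolding Q by (simp add: mult_ac)
    finally have "cnj (l2inner u (conv h u)) = l2inner u (conv h u)" .
    then show ?thesis by (metis complex_cnj_cancel_iff complex_cnj_complex_of_real Im_complex_of_real
          complex_is_Real_iff Reals_cnj_iff)
  qed
  have w: "conv h f \<in> l2" "l2norm (conv h f) \<le> K * l2norm f" using op f by (auto simp: opb_def)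
  have "\<bar>Im (l2inner f (conv h f))\<bar> \<le> 0 + e" if e: "e > 0" for e
  proof -
    define d where "d = e / (2 * K * l2norm f + 1)"
    have dpos: "0 < d" using e K by (simp add: d_def add_nonneg_pos)
    obtain F where F: "finite F" and tail: "l2norm (\<lambda>x. f x - (if x \<in> F then f x else 0)) \<le> d"
      using tail_approx[OF f dpos] by blast
    define fF :: "'g vec" where "fF = (\<lambda>x. if x \<in> F then f x else 0)"
    have fF: "fF \<in> l2" "l2norm fF \<le> l2norm f" using trunc_le[OF f] by (auto simp: fF_def)
    have r: "(\<lambda>x. f x - fF x) \<in> l2" using l2_diff[OF f fF(1)] by blast
    have wF: "conv h fF \<in> l2" using op fF by (auto simp: opb_def)
    have ImF: "Im (l2inner fF (conv h fF)) = 0" by (rule fin[OF F]) (simp add: fF_def)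
    have wd: "(\<lambda>x. conv h f x - conv h fF x) = conv h (\<lambda>x. f x - fF x)"
      using conv_lin_f[OF h f fF(1), of "-1"] by simp
    have "l2inner f (conv h f) - l2inner fF (conv h fF) =
        l2inner (\<lambda>x. f x - fF x) (conv h f) + l2inner fF (conv h (\<lambda>x. f x - fF x))"
      using l2inner_diff[OF f w(1) fF(1) wF] wd by simp
    then have "cmod (l2inner f (conv h f) - l2inner fF (conv h fF)) \<le>
        l2norm (\<lambda>x. f x - fF x) * l2norm (conv h f) + l2norm fF * l2norm (conv h (\<lambda>x. f x - fF x))"
      using l2inner_bound[OF r w(1)] l2inner_bound[OF fF(1), of "conv h (\<lambda>x. f x - fF x)"] op r
      by (auto simp: opb_def intro!: order_trans[OF norm_triangle_ineq] add_mono)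
    also have "\<dots> \<le> d * (K * l2norm f) + l2norm f * (K * d)"
    proof (rule add_mono)
      show "l2norm (\<lambda>x. f x - fF x) * l2norm (conv h f) \<le> d * (K * l2norm f)"
        using tail w(2) dpos by (intro mult_mono) (auto simp: fF_def)
      have "l2norm (conv h (\<lambda>x. f x - fF x)) \<le> K * l2norm (\<lambda>x. f x - fF x)" using op r by (auto simp: opb_def)
      also have "\<dots> \<le> K * d" using tail K by (intro mult_left_mono) (auto simp: fF_def)
      finally show "l2norm fF * l2norm (conv h (\<lambda>x. f x - fF x)) \<le> l2norm f * (K * d)"
        using fF(2) by (intro mult_mono) auto
    qed
    also have "\<dots> = (2 * K * l2norm f) * d" by (simp add: algebra_simps)
    also have "\<dots> \<le> (2 * K * l2norm f + 1) * d" using dpos by (simp add: mult_right_mono)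
    also have "\<dots> = e"
    proof -
      have "0 < 2 * K * l2norm f + 1" using K by (simp add: add_nonneg_pos)
      then show ?thesis unfolding d_def by simp
    qed
    finally have "cmod (l2inner f (conv h f) - l2inner fF (conv h fF)) \<le> e" .
    moreover have "\<bar>Im (l2inner f (conv h f))\<bar> = \<bar>Im (l2inner f (conv h f) - l2inner fF (conv h fF))\<bar>"
      using ImF by simp
    ultimately show ?thesis using abs_Im_le_cmod by (metis add_0 order_trans)
  qed
  then have "\<bar>Im (l2inner f (conv h f))\<bar> \<le> 0" by (rule field_le_epsilon)
  then show ?thesis by simp
qed

lemma st_lin: "is_state \<phi> \<Longrightarrow> T \<in> Cred \<Longrightarrow> S \<in> Cred \<Longrightarrow> \<phi> (\<lambda>f x. T f x + c * S f x) = \<phi> T + c * \<phi> S"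
  unfolding is_state_def by blast

lemma st_pos: "is_state \<phi> \<Longrightarrow> T \<in> Cred \<Longrightarrow> pos_op T \<Longrightarrow> \<phi> T \<in> \<real> \<and> Re (\<phi> T) \<ge> 0"
  unfolding is_state_def by blast

lemma st_one: "is_state \<phi> \<Longrightarrow> \<phi> (lreg 0) = 1"
  unfolding is_state_def by blast

lemma lreg0_Cred: "lreg 0 \<in> (Cred :: 'g::group_add op set)"
proof -
  have "lreg (0::'g) = grop {0} (\<lambda>_. 1)" by (auto simp: lreg_def grop_def fun_eq_iff)
  then show ?thesis using Cred_grop[of "{0::'g}" "\<lambda>_. 1"] by simp
qed

lemma lreg0_id: "f \<in> l2 \<Longrightarrow> lreg 0 f = f"
  by (simp add: lreg_def)

lemma pos_bound:
  fixes H :: "'g::group_add op"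
  assumes \<phi>: "is_state \<phi>" and H: "H \<in> Cred" and \<omega>: "cmod \<omega> = 1" and c: "0 < c"
    and Q: "\<And>f. f \<in> l2 \<Longrightarrow> Im (\<omega> * l2inner f (H f)) = 0 \<and> cmod (l2inner f (H f)) \<le> c * (l2norm f)\<^sup>2"
  shows "cmod (\<phi> H) \<le> c"
proof -
  have claim: "Im (\<omega> * \<phi> H) = 0 \<and> s * Re (\<omega> * \<phi> H) \<le> c" if s: "\<bar>s\<bar> = 1" for s :: real
  proof -
    define c' where "c' = complex_of_real (- s / c) * \<omega>"
    define P where "P = (\<lambda>f x. lreg 0 f x + c' * H f x)"
    have P: "P \<in> Cred" unfolding P_def by (rule Cred_lin[OF lreg0_Cred H])
    have "pos_op P" unfolding pos_op_def
    proof (intro ballI conjI)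
      fix f :: "'g vec" assume f: "f \<in> l2"
      have Hf: "H f \<in> l2" by (rule bdd_op_l2[OF Cred_bdd[OF H] f])
      define z where "z = \<omega> * l2inner f (H f)"
      have z: "Im z = 0" "\<bar>Re z\<bar> \<le> c * (l2norm f)\<^sup>2"
      proof -
        show "Im z = 0" using Q[OF f] by (simp add: z_def)
        have "\<bar>Re z\<bar> \<le> cmod z" by (rule abs_Re_le_cmod)
        also have "\<dots> = cmod (l2inner f (H f))" by (simp add: z_def norm_mult \<omega>)
        also have "\<dots> \<le> c * (l2norm f)\<^sup>2" using Q[OF f] by blast
        finally show "\<bar>Re z\<bar> \<le> c * (l2norm f)\<^sup>2" .
      qed
      have "l2inner f (P f) = l2inner f f + c' * l2inner f (H f)"
        unfolding P_def lreg0_id[OF f] by (rule l2inner_lin2[OF f f Hf])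
      also have "\<dots> = complex_of_real ((l2norm f)\<^sup>2) + complex_of_real (- s / c) * z"
        by (simp add: l2inner_self[OF f] c'_def z_def mult.assoc)
      finally have e: "l2inner f (P f) = complex_of_real ((l2norm f)\<^sup>2) + complex_of_real (- s / c) * z" .
      show "l2inner f (P f) \<in> \<real>" unfolding e using z(1) by (simp add: complex_is_Real_iff)
      have "(s / c) * Re z \<le> \<bar>s / c\<bar> * \<bar>Re z\<bar>" by (metis abs_mult abs_ge_self)
      also have "\<dots> = \<bar>Re z\<bar> / c" using s c by (simp add: abs_divide)
      also have "\<dots> \<le> (l2norm f)\<^sup>2" using z(2) c by (simp add: divide_le_eq mult.commute)
      finally show "0 \<le> Re (l2inner f (P f))" unfolding e by simp
    qed
    then have pp: "\<phi> P \<in> \<real>" "0 \<le> Re (\<phi> P)" using st_pos[OF \<phi> P] by auto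
    have "\<phi> P = 1 + c' * \<phi> H" unfolding P_def using st_lin[OF \<phi> lreg0_Cred H] st_one[OF \<phi>] by simp
    then have eP: "\<phi> P = 1 + complex_of_real (- s / c) * (\<omega> * \<phi> H)" by (simp add: c'_def mult.assoc)
    have s0: "s \<noteq> 0" using s by auto
    have "Im (\<phi> P) = 0" using pp(1) by (simp add: complex_is_Real_iff)
    then have "(- s / c) * Im (\<omega> * \<phi> H) = 0" unfolding eP by simp
    then have i: "Im (\<omega> * \<phi> H) = 0" using s0 c by simp
    have "0 \<le> 1 - (s / c) * Re (\<omega> * \<phi> H)" using pp(2) unfolding eP by simp
    then have "(s / c) * Re (\<omega> * \<phi> H) \<le> 1" by simp
    then have "s * Re (\<omega> * \<phi> H) \<le> c" using c by (simp add: divide_le_eq mult.commute)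
    with i show ?thesis by simp
  qed
  have i: "Im (\<omega> * \<phi> H) = 0" and r1: "Re (\<omega> * \<phi> H) \<le> c" and r2: "- Re (\<omega> * \<phi> H) \<le> c"
    using claim[of 1] claim[of "-1"] by auto
  have "cmod (\<omega> * \<phi> H) = \<bar>Re (\<omega> * \<phi> H)\<bar>" using i by (simp add: cmod_eq_Re)
  also have "\<dots> \<le> c" using r1 r2 by simp
  finally show ?thesis by (simp add: norm_mult \<omega>)
qed



lemma conv_scale: "conv (\<lambda>g. c * k g) f = (\<lambda>x. c * conv k f x)"
  unfolding conv_def by (simp add: mult.assoc infsum_cmult_right')

lemma adj_diff: "adj (\<lambda>g. b g - k g) = (\<lambda>g. adj b g - adj k g)"
  by (simp add: adj_def fun_eq_iff)

lemma adj_Cred: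
  fixes X :: "'g::group_add op"
  assumes X: "X \<in> Cred"
  shows "Conv (adj (X (delta 0))) \<in> Cred"
proof -
  define b where "b = X (delta 0)"
  have b: "b \<in> l2" unfolding b_def by (rule bdd_op_l2[OF Cred_bdd[OF X]]) simp
  have Xc: "X f = conv b f" if "f \<in> l2" for f unfolding b_def by (rule C1[OF X that])
  have K: "0 \<le> opnorm X" by (rule opnorm_nonneg[OF Cred_bdd[OF X]])
  have opX: "opb (conv b) (opnorm X)" unfolding opb_def
    using Xc opnorm_bound[OF Cred_bdd[OF X]] bdd_op_l2[OF Cred_bdd[OF X]] by auto
  have ab: "adj b \<in> l2" using adj_l2[OF b] by blast
  have bdY: "bdd_op (Conv (adj b))"
    using bdd_op_Conv[OF ab adj_bound[OF b K opX]] by blast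
  have "\<exists>G d. finite G \<and> opnorm (\<lambda>f x. Conv (adj b) f x - grop G d f x) < e" if e: "e > 0" for e
  proof -
    obtain G c where G: "finite G" and op: "opnorm (\<lambda>f x. X f x - grop G c f x) < e"
      and bZ: "bdd_op (\<lambda>f x. X f x - grop G c f x)"
      using Cred_approx[OF X e] by blast
    define Z where "Z = (\<lambda>f x. X f x - grop G c f x)"
    define k where "k = (\<lambda>g. if g \<in> G then c g else 0)"
    have k: "k \<in> l2" by (rule l2_fin, rule finite_subset[OF _ G]) (auto simp: k_def)
    have bk: "(\<lambda>g. b g - k g) \<in> l2" using l2_diff[OF b k] by blast
    have Zc: "Z f = conv (\<lambda>g. b g - k g) f" if f: "f \<in> l2" for f
      using grop_Conv[OF G, of c] Xc[OF f] conv_diff[OF b k f] f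
      by (simp add: Z_def Conv_def k_def fun_eq_iff)
    have Z0: "0 \<le> opnorm Z" unfolding Z_def by (rule opnorm_nonneg[OF bZ])
    have opZ: "opb (conv (\<lambda>g. b g - k g)) (opnorm Z)" unfolding opb_def
      using Zc opnorm_bound[OF bZ[folded Z_def]] bdd_op_l2[OF bZ[folded Z_def]] by auto
    have opA: "opb (conv (adj (\<lambda>g. b g - k g))) (opnorm Z)" by (rule adj_bound[OF bk Z0 opZ])
    define G' where "G' = uminus ` G"
    have G': "finite G'" using G by (simp add: G'_def)
    have ak: "(\<lambda>g. if g \<in> G' then adj c g else 0) = adj k"
      by (auto simp: G'_def adj_def k_def fun_eq_iff image_iff intro: bexI[of _ "- _"])
    have akl: "adj k \<in> l2" using adj_l2[OF k] by blast
    have eq: "Conv (adj b) f x - grop G' (adj c) f x = Conv (adj (\<lambda>g. b g - k g)) f x" for f x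
    proof (cases "f \<in> l2")
      case True
      then show ?thesis using grop_Conv[OF G', of "adj c"] conv_diff[OF ab akl True, of x]
        by (simp add: Conv_def ak adj_diff)
    next
      case False then show ?thesis by (simp add: Conv_def grop_def)
    qed
    have "opnorm (\<lambda>f x. Conv (adj b) f x - grop G' (adj c) f x) \<le> opnorm Z"
    proof (rule opnorm_least)
      fix f :: "'g vec" assume f: "f \<in> l2" "l2norm f \<le> 1"
      have "(\<lambda>x. Conv (adj b) f x - grop G' (adj c) f x) = Conv (adj (\<lambda>g. b g - k g)) f"
        by (rule ext) (rule eq)
      then have "l2norm (\<lambda>x. Conv (adj b) f x - grop G' (adj c) f x) = l2norm (conv (adj (\<lambda>g. b g - k g)) f)"
        using f by (simp add: Conv_def)
      also have "\<dots> \<le> opnorm Z * l2norm f" using opA f by (simp add: opb_def)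
      also have "\<dots> \<le> opnorm Z" using f Z0 by (simp add: mult_left_le)
      finally show "l2norm ((\<lambda>f x. Conv (adj b) f x - grop G' (adj c) f x) f) \<le> opnorm Z" by simp
    qed
    then show ?thesis using op G' unfolding Z_def by (intro exI[of _ G'] exI[of _ "adj c"]) auto
  qed
  then show ?thesis using bdY unfolding Cred_def b_def by blast
qed

lemma state_bound:
  fixes X :: "'g::group_add op"
  assumes \<phi>: "is_state \<phi>" and X: "X \<in> Cred"
  shows "cmod (\<phi> X) \<le> 2 * opnorm X"
proof -
  define b where "b = X (delta 0)"
  define K where "K = opnorm X"
  have b: "b \<in> l2" unfolding b_def by (rule bdd_op_l2[OF Cred_bdd[OF X]]) simp
  have Xc: "X f = conv b f" if "f \<in> l2" for f unfolding b_def by (rule C1[OF X that])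
  have K: "0 \<le> K" unfolding K_def by (rule opnorm_nonneg[OF Cred_bdd[OF X]])
  have opX: "opb (conv b) K" unfolding opb_def K_def
    using Xc opnorm_bound[OF Cred_bdd[OF X]] bdd_op_l2[OF Cred_bdd[OF X]] by auto
  have ab: "adj b \<in> l2" using adj_l2[OF b] by blast
  have opY: "opb (conv (adj b)) K" by (rule adj_bound[OF b K opX])
  define Y where "Y = Conv (adj b)"
  have Y: "Y \<in> Cred" unfolding Y_def b_def by (rule adj_Cred[OF X])
  define H1 where "H1 = (\<lambda>f x. X f x + 1 * Y f x)"
  define D where "D = (\<lambda>f x. X f x + (-1) * Y f x)"
  have H1: "H1 \<in> Cred" unfolding H1_def by (rule Cred_lin[OF X Y])
  have D: "D \<in> Cred" unfolding D_def by (rule Cred_lin[OF X Y])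
  define h1 where "h1 = (\<lambda>g. b g + 1 * adj b g)"
  define h2 where "h2 = (\<lambda>g. \<i> * (b g + (-1) * adj b g))"
  have h1l: "h1 \<in> l2" using l2_lin[OF b ab, of 1] by (simp add: h1_def)
  have h2l: "h2 \<in> l2" using l2_lin[OF b ab, of "-1"] l2_scale[of "\<lambda>g. b g + (-1) * adj b g" \<i>]
    by (simp add: h2_def)
  have H1c: "H1 f = conv h1 f" if f: "f \<in> l2" for f
    using conv_lin_b[OF b ab f, of 1] Xc[OF f] f by (simp add: H1_def Y_def Conv_def h1_def)
  have Dc: "(\<lambda>x. \<i> * D f x) = conv h2 f" if f: "f \<in> l2" for f
    using conv_lin_b[OF b ab f, of "-1"] Xc[OF f] f
    by (simp add: D_def Y_def Conv_def h2_def conv_scale)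
  have normD: "l2norm (H f) \<le> (2 * K) * l2norm f" if f: "f \<in> l2" and HH: "H = H1 \<or> H = D" for f H
  proof -
    have Xf: "X f \<in> l2" "l2norm (X f) \<le> K * l2norm f" using opX Xc[OF f] f by (auto simp: opb_def)
    have Yf: "Y f \<in> l2" "l2norm (Y f) \<le> K * l2norm f" using opY f by (auto simp: opb_def Y_def Conv_def)
    have n: "l2norm (\<lambda>x. X f x + cc * Y f x) \<le> 2 * K * l2norm f" if "cmod cc = 1" for cc
      using l2_lin[OF Xf(1) Yf(1), of cc] Xf(2) Yf(2) that by simp
    have n1: "l2norm (\<lambda>x. X f x + Y f x) \<le> 2 * K * l2norm f" using n[of 1] by simp
    have n2: "l2norm (\<lambda>x. X f x - Y f x) \<le> 2 * K * l2norm f" using n[of "-1"] by simp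
    show ?thesis using HH n1 n2 by (auto simp: H1_def D_def)
  qed
  have opH1: "opb (conv h1) (2 * K)" unfolding opb_def
  proof
    fix f :: "'g vec" assume f: "f \<in> l2"
    have "H1 f \<in> l2" by (rule bdd_op_l2[OF Cred_bdd[OF H1] f])
    then show "conv h1 f \<in> l2 \<and> l2norm (conv h1 f) \<le> 2 * K * l2norm f"
      using normD[OF f, of H1] H1c[OF f] by simp
  qed
  have opH2: "opb (conv h2) (2 * K)" unfolding opb_def
  proof
    fix f :: "'g vec" assume f: "f \<in> l2"
    have Df: "D f \<in> l2" by (rule bdd_op_l2[OF Cred_bdd[OF D] f])
    have "(\<lambda>x. \<i> * D f x) \<in> l2 \<and> l2norm (\<lambda>x. \<i> * D f x) = l2norm (D f)" using l2_scale[OF Df, of \<i>] by simp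
    then show "conv h2 f \<in> l2 \<and> l2norm (conv h2 f) \<le> 2 * K * l2norm f"
      using normD[OF f, of D] Dc[OF f] by simp
  qed
  have adjneg: "adj b (- g) = cnj (b g)" for g by (simp add: adj_def)
  have sym1: "h1 (- g) = cnj (h1 g)" for g by (simp add: h1_def adjneg adj_def)
  have sym2: "h2 (- g) = cnj (h2 g)" for g by (simp add: h2_def adjneg adj_def algebra_simps)
  have K2: "0 \<le> 2 * K" using K by simp
  have bd: "cmod (\<phi> H1) \<le> 2 * K + e \<and> cmod (\<phi> D) \<le> 2 * K + e" if e: "e > 0" for e
  proof
    have c: "0 < 2 * K + e" using K e by simp
    show "cmod (\<phi> H1) \<le> 2 * K + e"
    proof (rule pos_bound[OF \<phi> H1 _ c, of 1])
      fix f :: "'g vec" assume f: "f \<in> l2"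
      have "Im (l2inner f (conv h1 f)) = 0" by (rule herm_real[OF h1l K2 opH1 sym1 f])
      moreover have "cmod (l2inner f (H1 f)) \<le> l2norm f * l2norm (H1 f)"
        by (rule l2inner_bound[OF f bdd_op_l2[OF Cred_bdd[OF H1] f]])
      moreover have "l2norm f * l2norm (H1 f) \<le> l2norm f * ((2 * K) * l2norm f)"
        by (rule mult_left_mono[OF normD[OF f]]) auto
      ultimately show "Im (1 * l2inner f (H1 f)) = 0 \<and> cmod (l2inner f (H1 f)) \<le> (2 * K + e) * (l2norm f)\<^sup>2"
        using H1c[OF f] e by (auto simp: power2_eq_square algebra_simps intro: order_trans)
    qed simp
    show "cmod (\<phi> D) \<le> 2 * K + e"
    proof (rule pos_bound[OF \<phi> D _ c, of \<i>])
      fix f :: "'g vec" assume f: "f \<in> l2"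
      have Df: "D f \<in> l2" by (rule bdd_op_l2[OF Cred_bdd[OF D] f])
      have "Im (l2inner f (conv h2 f)) = 0" by (rule herm_real[OF h2l K2 opH2 sym2 f])
      moreover have "l2inner f (conv h2 f) = \<i> * l2inner f (D f)"
        unfolding Dc[OF f, symmetric] l2inner_def by (simp add: mult.left_commute infsum_cmult_right')
      moreover have "cmod (l2inner f (D f)) \<le> l2norm f * l2norm (D f)"
        by (rule l2inner_bound[OF f Df])
      moreover have "l2norm f * l2norm (D f) \<le> l2norm f * ((2 * K) * l2norm f)"
        by (rule mult_left_mono[OF normD[OF f]]) auto
      ultimately show "Im (\<i> * l2inner f (D f)) = 0 \<and> cmod (l2inner f (D f)) \<le> (2 * K + e) * (l2norm f)\<^sup>2"
        using e by (auto simp: power2_eq_square algebra_simps intro: order_trans)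
    qed simp
  qed
  have e1: "\<phi> H1 = \<phi> X + \<phi> Y" using st_lin[OF \<phi> X Y, of 1] by (simp add: H1_def)
  have e2: "\<phi> D = \<phi> X - \<phi> Y" using st_lin[OF \<phi> X Y, of "-1"] by (simp add: D_def)
  have "\<phi> X * 2 = \<phi> H1 + \<phi> D" using e1 e2 by simp
  then have "cmod (\<phi> X * 2) \<le> cmod (\<phi> H1) + cmod (\<phi> D)" by (metis norm_triangle_ineq)
  then have tri: "cmod (\<phi> X) \<le> (cmod (\<phi> H1) + cmod (\<phi> D)) / 2" by (simp add: norm_mult)
  have "cmod (\<phi> X) \<le> 2 * K + e" if e: "e > 0" for e
  proof -
    have "cmod (\<phi> X) \<le> (cmod (\<phi> H1) + cmod (\<phi> D)) / 2" by (rule tri)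
    also have "\<dots> \<le> 2 * K + e" using bd[OF e] by simp
    finally show ?thesis .
  qed
  then show ?thesis unfolding K_def by (rule field_le_epsilon)
qed



lemma zero_op_Cred: "(\<lambda>f x. 0) \<in> (Cred :: 'g::group_add op set)"
proof -
  have "(\<lambda>f x. 0) = grop ({}::'g set) (\<lambda>_. 0)" by (auto simp: grop_def fun_eq_iff)
  then show ?thesis using Cred_grop[of "{}::'g set" "\<lambda>_. 0"] by simp
qed

lemma st_zero: assumes "is_state \<phi>" shows "\<phi> (\<lambda>f x. 0) = 0"
proof -
  have "\<phi> (\<lambda>f x. (\<lambda>f x. 0) f x + 1 * (\<lambda>f x. 0) f x) = \<phi> (\<lambda>f x. 0) + 1 * \<phi> (\<lambda>f x. 0)"
    by (rule st_lin[OF assms zero_op_Cred zero_op_Cred])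
  then show ?thesis by simp
qed

lemma lreg_Cred: "lreg g \<in> Cred"
proof -
  have "lreg g = grop {g} (\<lambda>_. 1)" by (auto simp: lreg_def grop_def fun_eq_iff)
  then show ?thesis using Cred_grop[of "{g}" "\<lambda>_. 1"] by simp
qed

lemma st_grop:
  assumes \<phi>: "is_state \<phi>" and G: "finite G"
  shows "\<phi> (grop G c) = (\<Sum>g\<in>G. c g * \<phi> (lreg g))"
  using G
proof (induction G rule: finite_induct)
  case empty
  have "grop {} c = (\<lambda>f x. 0)" by (auto simp: grop_def fun_eq_iff)
  then show ?case using st_zero[OF \<phi>] by simp
next
  case (insert g G)
  have "grop (insert g G) c = (\<lambda>f x. grop G c f x + c g * lreg g f x)"
    using insert.hyps by (auto simp: grop_def lreg_def fun_eq_iff)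
  then have "\<phi> (grop (insert g G) c) = \<phi> (grop G c) + c g * \<phi> (lreg g)"
    using st_lin[OF \<phi> Cred_grop[OF insert.hyps(1)] lreg_Cred] by simp
  then show ?case using insert by simp
qed

lemma L_diff:
  fixes L :: "'g::group_add \<Rightarrow> real"
  assumes subadd: "\<forall>g h. L (g + h) \<le> L g + L h" and symm: "\<forall>g. L (- g) = L g"
  shows "\<bar>L x - L (- g + x)\<bar> \<le> L g"
proof -
  have "L x = L (g + (- g + x))" by (simp add: add.assoc[symmetric])
  also have "\<dots> \<le> L g + L (- g + x)" using subadd by blast
  finally have 1: "L x \<le> L g + L (- g + x)" .
  have "L (- g + x) \<le> L (- g) + L x" using subadd by blast
  then have 2: "L (- g + x) \<le> L g + L x" using symm by simp
  show ?thesis using 1 2 by linarith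
qed

lemma finsupp_translate:
  fixes \<xi> :: "'g::group_add vec"
  assumes "finite {y. \<xi> y \<noteq> 0}"
  shows "finite {x. \<xi> (- g + x) \<noteq> 0}"
proof -
  have "{x. \<xi> (- g + x) \<noteq> 0} \<subseteq> (\<lambda>y. g + y) ` {y. \<xi> y \<noteq> 0}"
  proof
    fix x assume "x \<in> {x. \<xi> (- g + x) \<noteq> 0}"
    then show "x \<in> (\<lambda>y. g + y) ` {y. \<xi> y \<noteq> 0}"
      by (intro image_eqI[of _ _ "- g + x"]) (auto simp: add_minus_cancel)
  qed
  then show ?thesis using assms finite_surj by blast
qed

lemma lip_translate:
  fixes L :: "'g::group_add \<Rightarrow> real"
  assumes subadd: "\<forall>g h. L (g + h) \<le> L g + L h" and symm: "\<forall>g. L (- g) = L g"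
    and Lg: "L g > 0"
  shows "lip1 L (grop {g} (\<lambda>_. complex_of_real (1 / L g)))"
proof -
  define s where "s = complex_of_real (1 / L g)"
  have T: "grop {g} (\<lambda>_. s) f = (\<lambda>x. s * f (- g + x))" if "f \<in> l2" for f
    using that by (simp add: grop_def)
  show ?thesis unfolding lip1_def s_def[symmetric]
  proof (intro conjI allI impI)
    show "grop {g} (\<lambda>_. s) \<in> Cred" by (rule Cred_grop) simp
    fix \<xi> :: "'g vec" assume fin: "finite {x. \<xi> x \<noteq> 0}"
    have \<xi>: "\<xi> \<in> l2" by (rule l2_fin[OF fin])
    have fin2: "finite {x. complex_of_real (L x) * \<xi> x \<noteq> 0}"
      by (rule finite_subset[OF _ fin]) auto
    have L\<xi>: "(\<lambda>y. complex_of_real (L y) * \<xi> y) \<in> l2" by (rule l2_fin[OF fin2])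
    have fin3: "finite {x. complex_of_real (L x) * (s * \<xi> (- g + x)) \<noteq> 0}"
      by (rule finite_subset[OF _ finsupp_translate[OF fin, of g]]) auto
    show "(\<lambda>x. complex_of_real (L x) * grop {g} (\<lambda>_. s) \<xi> x) \<in> l2"
      unfolding T[OF \<xi>] by (rule l2_fin[OF fin3])
    have tr: "(\<lambda>x. \<xi> (- g + x)) \<in> l2 \<and> l2norm (\<lambda>x. \<xi> (- g + x)) = l2norm \<xi>" by (rule l2_translate2[OF \<xi>])
    have "l2norm (\<lambda>x. complex_of_real (L x) * grop {g} (\<lambda>_. s) \<xi> x
          - grop {g} (\<lambda>_. s) (\<lambda>y. complex_of_real (L y) * \<xi> y) x) \<le> 1 * l2norm (\<lambda>x. \<xi> (- g + x))"
    proof (rule l2_compare[OF tr[THEN conjunct1], THEN conjunct2])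
      fix x
      have "complex_of_real (L x) * grop {g} (\<lambda>_. s) \<xi> x - grop {g} (\<lambda>_. s) (\<lambda>y. complex_of_real (L y) * \<xi> y) x
          = s * complex_of_real (L x - L (- g + x)) * \<xi> (- g + x)"
        unfolding T[OF \<xi>] T[OF L\<xi>] by (simp add: algebra_simps)
      also have "cmod \<dots> = (1 / L g) * \<bar>L x - L (- g + x)\<bar> * cmod (\<xi> (- g + x))"
        unfolding norm_mult norm_of_real using Lg by (simp add: s_def norm_divide)
      also have "\<dots> \<le> (1 / L g) * L g * cmod (\<xi> (- g + x))"
        using L_diff[OF subadd symm, of x g] Lg by (intro mult_right_mono mult_left_mono) auto
      also have "\<dots> = 1 * cmod (\<xi> (- g + x))" using Lg by simp
      finally show "cmod (complex_of_real (L x) * grop {g} (\<lambda>_. s) \<xi> x - grop {g} (\<lambda>_. s) (\<lambda>y. complex_of_real (L y) * \<xi> y) x)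
          \<le> 1 * cmod (\<xi> (- g + x))" .
    qed simp
    then show "l2norm (\<lambda>x. complex_of_real (L x) * grop {g} (\<lambda>_. s) \<xi> x - grop {g} (\<lambda>_. s) (\<lambda>y. complex_of_real (L y) * \<xi> y) x) \<le> l2norm \<xi>"
      using tr by simp
  qed
qed

lemma dist_le: "lip1 L S \<Longrightarrow> ereal (cmod (\<phi> S - \<psi> S)) \<le> dist_D L \<phi> \<psi>"
  unfolding dist_D_def by (rule SUP_upper) simp

lemma lip_coeff:
  fixes L :: "'g::group_add \<Rightarrow> real"
  assumes lip: "lip1 L T" and zero: "L 0 = 0"
  shows "(\<lambda>x. complex_of_real (L x) * T (delta 0) x) \<in> l2 \<and> l2norm (\<lambda>x. complex_of_real (L x) * T (delta 0) x) \<le> 1"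
proof -
  have T: "T \<in> Cred" using lip by (simp add: lip1_def)
  have fin: "finite {x. delta (0::'g) x \<noteq> 0}" by (simp add: delta_def)
  have z: "(\<lambda>y. complex_of_real (L y) * delta 0 y) = (\<lambda>_. 0)" using zero by (auto simp: delta_def fun_eq_iff)
  have "(\<lambda>x. complex_of_real (L x) * T (delta 0) x) \<in> l2 \<and>
      l2norm (\<lambda>x. complex_of_real (L x) * T (delta 0) x - T (\<lambda>y. complex_of_real (L y) * delta 0 y) x) \<le> l2norm (delta (0::'g))"
    using lip fin unfolding lip1_def by blast
  then show ?thesis using bdd_op_zero[OF Cred_bdd[OF T]] by (simp add: z)
qed

lemma lip_tail:
  fixes L :: "'g::group_add \<Rightarrow> real"
  assumes lip: "lip1 L T" and zero: "L 0 = 0" and R: "R > 0" and tau: "0 \<le> \<tau>"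
    and nonneg: "\<forall>g. L g \<ge> 0"
    and TC: "\<And>E. finite E \<Longrightarrow> E \<inter> {g. L g \<le> R} = {} \<Longrightarrow> (\<Sum>g\<in>E. 1 / (L g)\<^sup>2) \<le> \<tau>\<^sup>2"
  shows "(\<lambda>g. cmod (if L g \<le> R then 0 else T (delta 0) g)) summable_on UNIV \<and>
     (\<Sum>\<^sub>\<infinity>g. cmod (if L g \<le> R then 0 else T (delta 0) g)) \<le> \<tau>"
proof -
  define a where "a = T (delta 0)"
  have la: "(\<lambda>x. complex_of_real (L x) * a x) \<in> l2" "l2norm (\<lambda>x. complex_of_real (L x) * a x) \<le> 1"
    using lip_coeff[OF lip zero] by (auto simp: a_def)
  have b: "(\<Sum>g\<in>E. cmod (if L g \<le> R then 0 else a g)) \<le> \<tau>" if E: "finite E" for E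
  proof -
    define E' where "E' = E \<inter> {g. \<not> L g \<le> R}"
    have E': "finite E'" using E by (simp add: E'_def)
    have "(\<Sum>g\<in>E. cmod (if L g \<le> R then 0 else a g)) = (\<Sum>g\<in>E'. cmod (a g))"
      unfolding E'_def by (rule sum.mono_neutral_cong_right) (use E in auto)
    also have "\<dots> = (\<Sum>g\<in>E'. \<bar>cmod (complex_of_real (L g) * a g)\<bar> * \<bar>1 / L g\<bar>)"
    proof (rule sum.cong)
      fix g assume "g \<in> E'"
      then have "L g > R" by (simp add: E'_def)
      then have "L g > 0" using R by simp
      then show "cmod (a g) = \<bar>cmod (complex_of_real (L g) * a g)\<bar> * \<bar>1 / L g\<bar>"
        by (simp add: norm_mult)
    qed simp
    also have "\<dots> \<le> L2_set (\<lambda>g. cmod (complex_of_real (L g) * a g)) E' * L2_set (\<lambda>g. 1 / L g) E'"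
      by (rule L2_set_mult_ineq)
    also have "\<dots> \<le> 1 * \<tau>"
    proof (rule mult_mono)
      show "L2_set (\<lambda>g. cmod (complex_of_real (L g) * a g)) E' \<le> 1"
        using l2_FS'[OF la(1), of E'] la(2) by linarith
      have "(\<Sum>g\<in>E'. (1 / L g)\<^sup>2) \<le> \<tau>\<^sup>2" using TC[OF E'] by (auto simp: E'_def power_divide)
      then have "sqrt (\<Sum>g\<in>E'. (1 / L g)\<^sup>2) \<le> sqrt (\<tau>\<^sup>2)" by (rule real_sqrt_le_mono)
      then show "L2_set (\<lambda>g. 1 / L g) E' \<le> \<tau>"
        unfolding L2_set_def using tau by simp
    qed (auto simp: tau)
    finally show ?thesis by simp
  qed
  have s: "(\<lambda>g. cmod (if L g \<le> R then 0 else a g)) summable_on UNIV"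
    by (rule nonneg_bdd_above_summable_on) (auto intro!: bdd_aboveI2 b)
  then show ?thesis unfolding a_def[symmetric] using infsum_le_finite_sums[OF s] b by auto
qed



lemma key:
  fixes L :: "'g::group_add \<Rightarrow> real"
  assumes \<phi>: "is_state \<phi>" and \<psi>: "is_state \<psi>" and lip: "lip1 L T" and zero: "L 0 = 0"
    and R: "R > 0" and tau: "0 \<le> \<tau>" and nonneg: "\<forall>g. L g \<ge> 0" and pos: "\<forall>g. g \<noteq> 0 \<longrightarrow> L g > 0"
    and finG: "finite {g. L g \<le> R}"
    and TC: "\<And>E. finite E \<Longrightarrow> E \<inter> {g. L g \<le> R} = {} \<Longrightarrow> (\<Sum>g\<in>E. 1 / (L g)\<^sup>2) \<le> \<tau>\<^sup>2"
  shows "cmod (\<phi> T - \<psi> T) \<le> 4 * \<tau> + (\<Sum>g\<in>{g. L g \<le> R} - {0}. (1 / L g) * cmod (\<phi> (lreg g) - \<psi> (lreg g)))"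
proof -
  define G where "G = {g. L g \<le> R}"
  have G: "finite G" using finG by (simp add: G_def)
  have T: "T \<in> Cred" using lip by (simp add: lip1_def)
  define a where "a = T (delta 0)"
  have a: "a \<in> l2" unfolding a_def by (rule bdd_op_l2[OF Cred_bdd[OF T]]) simp
  define P where "P = grop G a"
  have P: "P \<in> Cred" unfolding P_def by (rule Cred_grop[OF G])
  define X where "X = (\<lambda>f x. T f x - P f x)"
  have X: "X \<in> Cred" unfolding X_def diff_op_eq by (rule Cred_lin[OF T P])
  define t where "t = (\<lambda>g. if L g \<le> R then 0 else a g)"
  have tl: "(\<lambda>g. cmod (t g)) summable_on UNIV" "(\<Sum>\<^sub>\<infinity>g. cmod (t g)) \<le> \<tau>"
    using lip_tail[OF lip zero R tau nonneg TC] unfolding t_def a_def by auto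
  define kG where "kG = (\<lambda>g. if g \<in> G then a g else 0)"
  have kG: "kG \<in> l2" by (rule l2_fin, rule finite_subset[OF _ G]) (auto simp: kG_def)
  have tk: "(\<lambda>g. a g - kG g) = t" by (auto simp: fun_eq_iff kG_def t_def G_def)
  have Xc: "X f = conv t f" if f: "f \<in> l2" for f
  proof
    fix x
    have "X f x = conv a f x - conv kG f x"
      using C1[OF T f] grop_Conv[OF G, of a] f by (simp add: X_def P_def a_def Conv_def kG_def)
    also have "\<dots> = conv t f x" using conv_diff[OF a kG f, of x] tk by simp
    finally show "X f x = conv t f x" .
  qed
  have opX: "opnorm X \<le> \<tau>"
  proof (rule opnorm_least)
    fix f :: "'g vec" assume f: "f \<in> l2" "l2norm f \<le> 1"
    have "l2norm (X f) \<le> (\<Sum>\<^sub>\<infinity>g. cmod (t g)) * l2norm f"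
      using C2[OF tl(1) f(1)] Xc[OF f(1)] by simp
    also have "\<dots> \<le> \<tau> * 1" using tl f tau by (intro mult_mono) (auto simp: infsum_nonneg)
    finally show "l2norm (X f) \<le> \<tau>" by simp
  qed
  have bX: "cmod (\<rho> X) \<le> 2 * \<tau>" if "is_state \<rho>" for \<rho>
    using state_bound[OF that X] opX by simp
  have Tdec: "T = (\<lambda>f x. X f x + 1 * P f x)" by (simp add: X_def)
  have dec: "\<rho> T = \<rho> X + (\<Sum>g\<in>G. a g * \<rho> (lreg g))" if ch: "is_state \<rho>" for \<rho>
  proof -
    have "\<rho> T = \<rho> X + 1 * \<rho> P" by (subst Tdec) (rule st_lin[OF ch X P])
    then show ?thesis using st_grop[OF ch G, of a] by (simp add: P_def)
  qed
  have "\<phi> T - \<psi> T = (\<phi> X - \<psi> X) + (\<Sum>g\<in>G. a g * (\<phi> (lreg g) - \<psi> (lreg g)))"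
    using dec[OF \<phi>] dec[OF \<psi>] by (simp add: algebra_simps sum_subtractf)
  also have "(\<Sum>g\<in>G. a g * (\<phi> (lreg g) - \<psi> (lreg g))) = (\<Sum>g\<in>G - {0}. a g * (\<phi> (lreg g) - \<psi> (lreg g)))"
    by (rule sum.mono_neutral_right[OF G]) (auto simp: st_one[OF \<phi>] st_one[OF \<psi>])
  finally have eq: "\<phi> T - \<psi> T = (\<phi> X - \<psi> X) + (\<Sum>g\<in>G - {0}. a g * (\<phi> (lreg g) - \<psi> (lreg g)))" .
  have ag: "cmod (a g) \<le> 1 / L g" if "g \<noteq> 0" for g
  proof -
    have Lg: "L g > 0" using pos that by blast
    have la: "(\<lambda>x. complex_of_real (L x) * a x) \<in> l2" "l2norm (\<lambda>x. complex_of_real (L x) * a x) \<le> 1"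
      using lip_coeff[OF lip zero] by (auto simp: a_def)
    have "cmod (complex_of_real (L g) * a g) \<le> 1" using l2_pointwise[OF la(1), of g] la(2) by linarith
    then have "L g * cmod (a g) \<le> 1" using Lg by (simp add: norm_mult)
    then show ?thesis using Lg by (simp add: field_simps)
  qed
  have "cmod (\<phi> T - \<psi> T) \<le> cmod (\<phi> X - \<psi> X) + cmod (\<Sum>g\<in>G - {0}. a g * (\<phi> (lreg g) - \<psi> (lreg g)))"
    unfolding eq by (rule norm_triangle_ineq)
  also have "\<dots> \<le> 4 * \<tau> + (\<Sum>g\<in>G - {0}. (1 / L g) * cmod (\<phi> (lreg g) - \<psi> (lreg g)))"
  proof (rule add_mono)
    show "cmod (\<phi> X - \<psi> X) \<le> 4 * \<tau>"
      using bX[OF \<phi>] bX[OF \<psi>] norm_triangle_ineq4[of "\<phi> X" "\<psi> X"] by linarith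
    have "cmod (\<Sum>g\<in>G - {0}. a g * (\<phi> (lreg g) - \<psi> (lreg g))) \<le> (\<Sum>g\<in>G - {0}. cmod (a g * (\<phi> (lreg g) - \<psi> (lreg g))))"
      by (rule norm_sum)
    also have "\<dots> \<le> (\<Sum>g\<in>G - {0}. (1 / L g) * cmod (\<phi> (lreg g) - \<psi> (lreg g)))"
    proof (rule sum_mono)
      fix g assume g: "g \<in> G - {0}"
      have "cmod (a g) * cmod (\<phi> (lreg g) - \<psi> (lreg g)) \<le> (1 / L g) * cmod (\<phi> (lreg g) - \<psi> (lreg g))"
        by (rule mult_right_mono[OF ag]) (use g in auto)
      then show "cmod (a g * (\<phi> (lreg g) - \<psi> (lreg g))) \<le> 1 / L g * cmod (\<phi> (lreg g) - \<psi> (lreg g))"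
        by (simp only: norm_mult)
    qed
    finally show "cmod (\<Sum>g\<in>G - {0}. a g * (\<phi> (lreg g) - \<psi> (lreg g))) \<le> (\<Sum>g\<in>G - {0}. (1 / L g) * cmod (\<phi> (lreg g) - \<psi> (lreg g)))" .
  qed
  finally show ?thesis by (simp add: G_def)
qed

lemma R_exists:
  fixes L :: "'g::group_add \<Rightarrow> real"
  assumes zero: "L 0 = 0" and nonneg: "\<forall>g. L g \<ge> 0"
    and summ: "(\<lambda>g. 1 / (L g)\<^sup>2) summable_on (UNIV - {0})" and tau: "\<tau> > 0"
  shows "\<exists>R>0. \<forall>E. finite E \<longrightarrow> E \<inter> {g. L g \<le> R} = {} \<longrightarrow> (\<Sum>g\<in>E. 1 / (L g)\<^sup>2) \<le> \<tau>\<^sup>2"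
proof -
  define S where "S = (\<Sum>\<^sub>\<infinity>g\<in>UNIV - {0}. 1 / (L g)\<^sup>2)"
  obtain F where F: "finite F" "F \<subseteq> UNIV - {0}" and d: "dist (\<Sum>g\<in>F. 1 / (L g)\<^sup>2) S \<le> \<tau>\<^sup>2"
    using infsum_finite_approximation[OF summ, of "\<tau>\<^sup>2"] tau by (auto simp: S_def)
  define R where "R = 1 + (\<Sum>g\<in>F. L g)"
  have R: "R > 0" unfolding R_def using nonneg by (simp add: sum_nonneg add_pos_nonneg)
  have LF: "L g < R" if "g \<in> F" for g
  proof -
    have "L g \<le> (\<Sum>g\<in>F. L g)" by (rule member_le_sum[OF that]) (use nonneg F in auto)
    then show ?thesis by (simp add: R_def)
  qed
  have "(\<Sum>g\<in>E. 1 / (L g)\<^sup>2) \<le> \<tau>\<^sup>2" if E: "finite E" "E \<inter> {g. L g \<le> R} = {}" for E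
  proof -
    have EF: "E \<inter> F = {}" using E(2) LF by fastforce
    have E0: "0 \<notin> E" using E(2) zero R by auto
    have "(\<Sum>g\<in>E. 1 / (L g)\<^sup>2) + (\<Sum>g\<in>F. 1 / (L g)\<^sup>2) = (\<Sum>g\<in>E \<union> F. 1 / (L g)\<^sup>2)"
      by (rule sum.union_disjoint[symmetric]) (use E F EF in auto)
    also have "\<dots> \<le> S" unfolding S_def
      by (rule finite_sum_le_infsum[OF summ]) (use E F E0 in auto)
    finally show ?thesis using d by (simp add: dist_real_def)
  qed
  then show ?thesis using R by blast
qed

lemma finite_eps:
  fixes d :: "'a \<Rightarrow> ereal"
  assumes "finite J" "\<And>i. i \<in> J \<Longrightarrow> \<exists>e>0. \<forall>\<psi>. d \<psi> < ereal e \<longrightarrow> Q i \<psi>"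
  shows "\<exists>e>0. \<forall>\<psi>. d \<psi> < ereal e \<longrightarrow> (\<forall>i\<in>J. Q i \<psi>)"
  using assms
proof (induction J rule: finite_induct)
  case empty then show ?case by (auto intro: exI[of _ 1])
next
  case (insert j J)
  obtain e1 where e1: "e1 > 0" "\<forall>\<psi>. d \<psi> < ereal e1 \<longrightarrow> Q j \<psi>" using insert.prems by blast
  obtain e2 where e2: "e2 > 0" "\<forall>\<psi>. d \<psi> < ereal e2 \<longrightarrow> (\<forall>i\<in>J. Q i \<psi>)" using insert by blast
  have "\<forall>\<psi>. d \<psi> < ereal (min e1 e2) \<longrightarrow> (\<forall>i\<in>insert j J. Q i \<psi>)"
  proof (intro allI impI)
    fix \<psi> assume "d \<psi> < ereal (min e1 e2)"
    then have "d \<psi> < ereal e1" "d \<psi> < ereal e2"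
      by (meson ereal_less_eq(3) min.cobounded1 min.cobounded2 order_less_le_trans)+
    then show "\<forall>i\<in>insert j J. Q i \<psi>" using e1 e2 by blast
  qed
  then show ?case using e1 e2 by (intro exI[of _ "min e1 e2"]) auto
qed

lemma cont:
  fixes L :: "'g::group_add \<Rightarrow> real"
  assumes \<phi>: "is_state \<phi>" and T: "T \<in> Cred" and r: "r > 0"
    and subadd: "\<forall>g h. L (g + h) \<le> L g + L h" and symm: "\<forall>g. L (- g) = L g"
    and nonneg: "\<forall>g. L g \<ge> 0" and pos: "\<forall>g. g \<noteq> 0 \<longrightarrow> L g > 0"
  shows "\<exists>e>0. \<forall>\<psi>. dist_D L \<phi> \<psi> < ereal e \<longrightarrow> (is_state \<psi> \<longrightarrow> cmod (\<psi> T - \<phi> T) < r)"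
proof -
  define \<eta> where "\<eta> = r / 8"
  have \<eta>: "\<eta> > 0" using r by (simp add: \<eta>_def)
  obtain G c where G: "finite G" and op: "opnorm (\<lambda>f x. T f x - grop G c f x) < \<eta>"
    using Cred_approx[OF T \<eta>] by blast
  define P where "P = grop G c"
  have P: "P \<in> Cred" unfolding P_def by (rule Cred_grop[OF G])
  define X where "X = (\<lambda>f x. T f x - P f x)"
  have X: "X \<in> Cred" unfolding X_def diff_op_eq by (rule Cred_lin[OF T P])
  have bX: "cmod (\<rho> X) \<le> 2 * \<eta>" if "is_state \<rho>" for \<rho>
    using state_bound[OF that X] op by (simp add: X_def P_def)
  have Tdec: "T = (\<lambda>f x. X f x + 1 * P f x)" by (simp add: X_def)
  have dec: "\<rho> T = \<rho> X + (\<Sum>g\<in>G. c g * \<rho> (lreg g))" if ch: "is_state \<rho>" for \<rho>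
  proof -
    have "\<rho> T = \<rho> X + 1 * \<rho> P" by (subst Tdec) (rule st_lin[OF ch X P])
    then show ?thesis using st_grop[OF ch G, of c] by (simp add: P_def)
  qed
  define M where "M = (\<Sum>g\<in>G. cmod (c g) * L g)"
  have M: "0 \<le> M" unfolding M_def using nonneg by (simp add: sum_nonneg)
  define e where "e = \<eta> / (M + 1)"
  have e: "e > 0" using \<eta> M by (simp add: e_def)
  have "cmod (\<psi> T - \<phi> T) < r" if \<psi>: "is_state \<psi>" and dd: "dist_D L \<phi> \<psi> < ereal e" for \<psi>
  proof -
    have lg: "cmod (\<psi> (lreg g) - \<phi> (lreg g)) \<le> L g * e" for g
    proof (cases "g = 0")
      case True then show ?thesis using st_one[OF \<phi>] st_one[OF \<psi>] nonneg e by simp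
    next
      case False
      have Lg: "L g > 0" using pos False by blast
      define S where "S = grop {g} (\<lambda>_. complex_of_real (1 / L g))"
      have lipS: "lip1 L S" unfolding S_def by (rule lip_translate[OF subadd symm Lg])
      have "ereal (cmod (\<phi> S - \<psi> S)) < ereal e" by (rule order_le_less_trans[OF dist_le[OF lipS] dd])
      then have lt: "cmod (\<phi> S - \<psi> S) < e" by simp
      have "\<rho> S = complex_of_real (1 / L g) * \<rho> (lreg g)" if "is_state \<rho>" for \<rho>
        using st_grop[OF that, of "{g}" "\<lambda>_. complex_of_real (1 / L g)"] by (simp add: S_def)
      then have "\<phi> S - \<psi> S = complex_of_real (1 / L g) * (\<phi> (lreg g) - \<psi> (lreg g))"
        using \<phi> \<psi> by (simp add: algebra_simps)
      then have "cmod (\<phi> S - \<psi> S) = (1 / L g) * cmod (\<phi> (lreg g) - \<psi> (lreg g))"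
        using Lg by (simp add: norm_mult norm_divide)
      then have "(1 / L g) * cmod (\<psi> (lreg g) - \<phi> (lreg g)) \<le> e" using lt by (simp add: norm_minus_commute)
      then show ?thesis using Lg by (simp add: field_simps)
    qed
    have "\<psi> T - \<phi> T = (\<psi> X - \<phi> X) + (\<Sum>g\<in>G. c g * (\<psi> (lreg g) - \<phi> (lreg g)))"
      using dec[OF \<phi>] dec[OF \<psi>] by (simp add: algebra_simps sum_subtractf)
    then have "cmod (\<psi> T - \<phi> T) \<le> cmod (\<psi> X - \<phi> X) + cmod (\<Sum>g\<in>G. c g * (\<psi> (lreg g) - \<phi> (lreg g)))"
      by (simp add: norm_triangle_ineq)
    also have "\<dots> \<le> 4 * \<eta> + M * e"
    proof (rule add_mono)
      show "cmod (\<psi> X - \<phi> X) \<le> 4 * \<eta>"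
        using bX[OF \<phi>] bX[OF \<psi>] norm_triangle_ineq4[of "\<psi> X" "\<phi> X"] by linarith
      have "cmod (\<Sum>g\<in>G. c g * (\<psi> (lreg g) - \<phi> (lreg g))) \<le> (\<Sum>g\<in>G. cmod (c g * (\<psi> (lreg g) - \<phi> (lreg g))))"
        by (rule norm_sum)
      also have "\<dots> \<le> (\<Sum>g\<in>G. cmod (c g) * (L g * e))"
        by (rule sum_mono) (auto simp: norm_mult intro!: mult_left_mono lg)
      also have "\<dots> = M * e" by (simp add: M_def sum_distrib_left mult_ac)
      finally show "cmod (\<Sum>g\<in>G. c g * (\<psi> (lreg g) - \<phi> (lreg g))) \<le> M * e" .
    qed
    also have "M * e \<le> \<eta>"
    proof -
      have "M * e = \<eta> * (M / (M + 1))" by (simp add: e_def)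
      also have "\<dots> \<le> \<eta> * 1" using M \<eta> by (intro mult_left_mono) auto
      finally show ?thesis by simp
    qed
    then have "4 * \<eta> + M * e < r" using \<eta> by (simp add: \<eta>_def)
    finally show ?thesis .
  qed
  then show ?thesis using e by blast
qed



theorem mainTheorem4:
  fixes L :: "'g::group_add \<Rightarrow> real"
  assumes subadd: "\<forall>g h. L (g + h) \<le> L g + L h"
    and symm: "\<forall>g. L (- g) = L g"
    and zero: "L 0 = 0"
    and nonneg: "\<forall>g. L g \<ge> 0"
    and pos: "\<forall>g. g \<noteq> 0 \<longrightarrow> L g > 0"
    and balls: "\<forall>c>0. finite {g. L g \<le> c}"
    and summ: "(\<lambda>g. 1 / (L g)\<^sup>2) summable_on (UNIV - {0})"
  shows "(\<forall>\<phi>\<in>states. \<forall>\<psi>\<in>states. dist_D L \<phi> \<psi> < \<infinity>) \<and>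
         (\<forall>U \<subseteq> states. openin weakstar U \<longleftrightarrow> dist_D_open L U)"
proof -
  have distbd: "dist_D L \<phi> \<psi> \<le> ereal (4 * \<tau> + (\<Sum>g\<in>{g. L g \<le> R} - {0}. (1 / L g) * cmod (\<phi> (lreg g) - \<psi> (lreg g))))"
    if \<phi>: "is_state \<phi>" and \<psi>: "is_state \<psi>" and R: "R > 0" and tau: "0 \<le> \<tau>"
      and TC: "\<forall>E. finite E \<longrightarrow> E \<inter> {g. L g \<le> R} = {} \<longrightarrow> (\<Sum>g\<in>E. 1 / (L g)\<^sup>2) \<le> \<tau>\<^sup>2" for \<phi> \<psi> R \<tau>
    unfolding dist_D_def
  proof (rule SUP_least)
    fix T assume "T \<in> {T. lip1 L T}"
    then have lip: "lip1 L T" by simp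
    show "ereal (cmod (\<phi> T - \<psi> T)) \<le> ereal (4 * \<tau> + (\<Sum>g\<in>{g. L g \<le> R} - {0}. (1 / L g) * cmod (\<phi> (lreg g) - \<psi> (lreg g))))"
      using key[OF \<phi> \<psi> lip zero R tau nonneg pos] balls R TC by simp
  qed
  have part1: "\<forall>\<phi>\<in>states. \<forall>\<psi>\<in>states. dist_D L \<phi> \<psi> < \<infinity>"
  proof (intro ballI)
    fix \<phi> \<psi> :: "'g op \<Rightarrow> complex" assume "\<phi> \<in> states" "\<psi> \<in> states"
    then have \<phi>: "is_state \<phi>" and \<psi>: "is_state \<psi>" by (auto simp: states_def)
    obtain R where R: "R > 0" and TC: "\<forall>E. finite E \<longrightarrow> E \<inter> {g. L g \<le> R} = {} \<longrightarrow> (\<Sum>g\<in>E. 1 / (L g)\<^sup>2) \<le> 1\<^sup>2"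
      using R_exists[OF zero nonneg summ, of 1] by auto
    have "dist_D L \<phi> \<psi> \<le> ereal (4 * 1 + (\<Sum>g\<in>{g. L g \<le> R} - {0}. (1 / L g) * cmod (\<phi> (lreg g) - \<psi> (lreg g))))"
      by (rule distbd[OF \<phi> \<psi> R _ TC]) simp
    also have "\<dots> < \<infinity>" by simp
    finally show "dist_D L \<phi> \<psi> < \<infinity>" .
  qed
  have part2: "openin weakstar U \<longleftrightarrow> dist_D_open L U" if U: "U \<subseteq> states" for U :: "('g op \<Rightarrow> complex) set"
  proof
    assume "openin weakstar U"
    then obtain W where W: "openin (product_topology (\<lambda>_. euclidean) Cred) W"
      and UW: "U = (\<lambda>\<phi>. restrict \<phi> Cred) -` W \<inter> states"
      unfolding weakstar_def openin_pullback_topology by blast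
    show "dist_D_open L U" unfolding dist_D_open_def
    proof (intro conjI ballI)
      show "U \<subseteq> states" by (rule U)
      fix \<phi> :: "'g op \<Rightarrow> complex" assume \<phi>U: "\<phi> \<in> U"
      then have \<phi>: "is_state \<phi>" using U by (auto simp: states_def)
      have "restrict \<phi> Cred \<in> W" using \<phi>U UW by blast
      then have "\<exists>V. finite {i \<in> Cred. V i \<noteq> topspace euclidean} \<and>
          (\<forall>i\<in>Cred. openin euclidean (V i)) \<and> restrict \<phi> Cred \<in> Pi\<^sub>E Cred V \<and> Pi\<^sub>E Cred V \<subseteq> W"
        using W unfolding openin_product_topology_alt by (rule bspec[rotated])
      then obtain V where finV: "finite {i \<in> Cred. V i \<noteq> topspace euclidean}"
        and Vo: "\<forall>i\<in>Cred. openin euclidean (V i)" and inV: "restrict \<phi> Cred \<in> Pi\<^sub>E Cred V"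
        and VW: "Pi\<^sub>E Cred V \<subseteq> W"
        by (elim exE conjE)
      define J where "J = {i \<in> Cred. V i \<noteq> UNIV}"
      have J: "finite J" using finV by (simp add: J_def)
      have "\<exists>e>0. \<forall>\<psi>. dist_D L \<phi> \<psi> < ereal e \<longrightarrow> (is_state \<psi> \<longrightarrow> \<psi> i \<in> V i)" if i: "i \<in> J" for i
      proof -
        have iC: "i \<in> Cred" using i by (simp add: J_def)
        have "restrict \<phi> Cred i \<in> V i" by (rule PiE_mem[OF inV iC])
        then have \<phi>i: "\<phi> i \<in> V i" using iC by simp
        have oV: "open (V i)" using Vo iC open_openin by blast
        obtain r where r: "r > 0" "ball (\<phi> i) r \<subseteq> V i" by (rule openE[OF oV \<phi>i])
        from cont[OF \<phi> iC r(1) subadd symm nonneg pos]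
        obtain e where e: "e > 0" "\<forall>\<psi>. dist_D L \<phi> \<psi> < ereal e \<longrightarrow> (is_state \<psi> \<longrightarrow> cmod (\<psi> i - \<phi> i) < r)"
          by (elim exE conjE)
        have "\<psi> i \<in> V i" if "dist_D L \<phi> \<psi> < ereal e" "is_state \<psi>" for \<psi> :: "'g op \<Rightarrow> complex"
        proof -
          have "cmod (\<psi> i - \<phi> i) < r" using e that by blast
          then have "\<psi> i \<in> ball (\<phi> i) r" by (simp add: dist_norm norm_minus_commute)
          then show ?thesis using r by blast
        qed
        then show ?thesis using e by blast
      qed
      then have "\<exists>e>0. \<forall>\<psi>. dist_D L \<phi> \<psi> < ereal e \<longrightarrow> (\<forall>i\<in>J. is_state \<psi> \<longrightarrow> \<psi> i \<in> V i)"
        by (rule finite_eps[OF J])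
      then obtain e where e: "e > 0" "\<forall>\<psi>. dist_D L \<phi> \<psi> < ereal e \<longrightarrow> (\<forall>i\<in>J. is_state \<psi> \<longrightarrow> \<psi> i \<in> V i)"
        by (elim exE conjE)
      have "\<psi> \<in> U" if \<psi>s: "\<psi> \<in> states" and d: "dist_D L \<phi> \<psi> < ereal e" for \<psi> :: "'g op \<Rightarrow> complex"
      proof -
        have \<psi>: "is_state \<psi>" using \<psi>s by (simp add: states_def)
        have "restrict \<psi> Cred \<in> Pi\<^sub>E Cred V"
        proof (subst PiE_iff, intro conjI ballI)
          fix i :: "'g op" assume iC: "i \<in> Cred"
          show "restrict \<psi> Cred i \<in> V i"
          proof (cases "i \<in> J")
            case True then show ?thesis using e d \<psi> iC by auto
          next
            case False then show ?thesis using iC by (auto simp: J_def)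
          qed
        qed simp
        then show ?thesis using VW UW \<psi>s by blast
      qed
      then show "\<exists>\<epsilon>>0. \<forall>\<psi>\<in>states. dist_D L \<phi> \<psi> < ereal \<epsilon> \<longrightarrow> \<psi> \<in> U" using e by blast
    qed
  next
    assume DO: "dist_D_open L U"
    have "\<exists>N. openin weakstar N \<and> \<phi> \<in> N \<and> N \<subseteq> U" if \<phi>U: "\<phi> \<in> U" for \<phi> :: "'g op \<Rightarrow> complex"
    proof -
      have \<phi>: "is_state \<phi>" using \<phi>U U by (auto simp: states_def)
      obtain e where e: "e > 0" and eU: "\<forall>\<psi>\<in>states. dist_D L \<phi> \<psi> < ereal e \<longrightarrow> \<psi> \<in> U"
        using DO \<phi>U unfolding dist_D_open_def by blast
      define \<tau> where "\<tau> = e / 16"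
      have \<tau>: "\<tau> > 0" using e by (simp add: \<tau>_def)
      obtain R where R: "R > 0" and TC: "\<forall>E. finite E \<longrightarrow> E \<inter> {g. L g \<le> R} = {} \<longrightarrow> (\<Sum>g\<in>E. 1 / (L g)\<^sup>2) \<le> \<tau>\<^sup>2"
        using R_exists[OF zero nonneg summ \<tau>] by auto
      define G where "G = {g. L g \<le> R}"
      have G: "finite G" using balls R by (simp add: G_def)
      define M where "M = (\<Sum>g\<in>G - {0}. 1 / L g)"
      have M: "0 \<le> M" unfolding M_def using nonneg by (simp add: sum_nonneg)
      define \<eta> where "\<eta> = \<tau> / (M + 1)"
      have \<eta>: "\<eta> > 0" using \<tau> M by (simp add: \<eta>_def)
      define N where "N = {\<psi> \<in> states. \<forall>g\<in>G. cmod (\<psi> (lreg g) - \<phi> (lreg g)) < \<eta>}"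
      have "\<phi> \<in> N" using \<phi> \<eta> by (simp add: N_def states_def)
      moreover have "N \<subseteq> U"
      proof
        fix \<psi> :: "'g op \<Rightarrow> complex" assume \<psi>N: "\<psi> \<in> N"
        then have \<psi>s: "\<psi> \<in> states" and \<psi>: "is_state \<psi>" by (auto simp: N_def states_def)
        have "dist_D L \<phi> \<psi> \<le> ereal (4 * \<tau> + (\<Sum>g\<in>G - {0}. (1 / L g) * cmod (\<phi> (lreg g) - \<psi> (lreg g))))"
          unfolding G_def by (rule distbd[OF \<phi> \<psi> R _ TC]) (use \<tau> in simp)
        also have "\<dots> \<le> ereal (4 * \<tau> + M * \<eta>)"
        proof -
          have "(\<Sum>g\<in>G - {0}. (1 / L g) * cmod (\<phi> (lreg g) - \<psi> (lreg g))) \<le> (\<Sum>g\<in>G - {0}. (1 / L g) * \<eta>)"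
          proof (rule sum_mono)
            fix g assume g: "g \<in> G - {0}"
            have "cmod (\<phi> (lreg g) - \<psi> (lreg g)) \<le> \<eta>"
              using \<psi>N g by (auto simp: N_def norm_minus_commute less_imp_le)
            then show "(1 / L g) * cmod (\<phi> (lreg g) - \<psi> (lreg g)) \<le> (1 / L g) * \<eta>"
              using nonneg by (intro mult_left_mono) auto
          qed
          also have "\<dots> = M * \<eta>" by (simp add: M_def sum_distrib_right)
          finally show ?thesis by simp
        qed
        also have "\<dots> < ereal e"
        proof -
          have "M * \<eta> = \<tau> * (M / (M + 1))" by (simp add: \<eta>_def)
          also have "\<dots> \<le> \<tau> * 1" using M \<tau> by (intro mult_left_mono) auto
          finally have "4 * \<tau> + M * \<eta> < e" using \<tau> by (simp add: \<tau>_def)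
          then show ?thesis by simp
        qed
        finally show "\<psi> \<in> U" using eU \<psi>s by blast
      qed
      moreover have "openin weakstar N"
      proof -
        define P where "P = product_topology (\<lambda>_. euclidean :: complex topology) (Cred :: 'g op set)"
        define W where "W = (\<Inter>g\<in>G. {x \<in> topspace P. x (lreg g) \<in> ball (\<phi> (lreg g)) \<eta>}) \<inter> topspace P"
        have "openin P W" unfolding W_def
        proof (rule openin_INT[OF G])
          fix g assume "g \<in> G"
          show "openin P {x \<in> topspace P. x (lreg g) \<in> ball (\<phi> (lreg g)) \<eta>}"
            unfolding P_def
            by (rule openin_continuous_map_preimage[OF continuous_map_product_projection[OF lreg_Cred]]) simp
        qed
        moreover have "N = (\<lambda>\<phi>. restrict \<phi> Cred) -` W \<inter> states"
          by (auto simp: N_def W_def P_def lreg_Cred dist_norm norm_minus_commute)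
        ultimately show ?thesis unfolding weakstar_def openin_pullback_topology P_def by blast
      qed
      ultimately show ?thesis by blast
    qed
    then show "openin weakstar U" by (subst openin_subopen) blast
  qed
  show ?thesis using part1 part2 by blast
qed


end
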